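(* (1) Let $\mathfrak l=\mathbb R^5$ (abelian) with basis dual to $\sigma^1,\dots,\sigma^5$, and $\mathfrak a=0$. Then $\mathcal H^2_Q(\mathfrak l,\mathfrak a)_0/G_{(\mathfrak l,\mathfrak a)}$ consists of exactly one element, represented by $[0,\gamma_0]$ with $\gamma_0=(\sigma^1\wedge\sigma^2+\sigma^3\wedge\sigma^4)\wedge\sigma^5$. (2) Let $\mathfrak l=\mathfrak g_{5,2}$ and $\mathfrak a=0$. Then $\mathcal H^2_Q(\mathfrak l,\mathfrak a)_0/G_{(\mathfrak l,\mathfrak a)}$ consists of exactly two elements, represented by $[0,\gamma_1]$ and $[0,\gamma_2]$ with $\gamma_1=\sigma^1\wedge\sigma^Y\wedge\sigma^Z$ and $\gamma_2=\sigma^1\wedge\sigma^Y\wedge\sigma^Z+\sigma^2\wedge\sigma^3\wedge\sigma^Z$, where $\sigma^1,\sigma^2,\sigma^3,\sigma^Y,\sigma^Z$ is the basis of $\mathfrak l^*$ dual to $X_1,X_2,X_3,Y,Z$.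
   Context: $\mathfrak g_{5,2}$ has basis $X_1,X_2,X_3,Y,Z$ with $[X_1,X_2]=Y$, $[X_1,X_3]=Z$, other brackets of basis vectors zero. For a Lie algebra $\mathfrak l$: $\mathfrak l^1=\mathfrak l$, $\mathfrak l^{k+1}=[\mathfrak l,\mathfrak l^k]$, $\mathfrak z(\mathfrak l)$ the centre. With $\mathfrak a=0$, $\mathcal H^2_Q(\mathfrak l,0)=H^3(\mathfrak l)$ (Lie algebra cohomology with trivial real coefficients), classes written $[0,\gamma]$. Admissibility (here $\alpha=0$): with $\mathfrak l^{m+2}=0$, $\mathfrak l_{(0)}=\mathfrak z(\mathfrak l)$, $\mathfrak l_{(k)}=\mathfrak z(\mathfrak l)\cap\mathfrak l^{k+1}$ ($k\ge1$), $[0,\gamma]$ is admissible iff for all $0\le k\le m$: whenever $L_0\in\mathfrak l_{(k)}$ and there is $Z_0\in(\mathfrak l^{k+1})^*$ with $\gamma(L,L_0,\cdot)=\langle Z_0,[L,\cdot]\rangle$ on $\mathfrak l^{k+1}$ for all $L\in\mathfrak l$, then $L_0=0$ (the nondegeneracy conditions are vacuous). A class $\varphi$ is decomposable if there are a non-trivial Lie algebra direct sum $\mathfrak l=\mathfrak l_1\oplus\mathfrak l_2$ and classes $\varphi_i=[\gamma_i]\in H^3(\mathfrak l_i)$ with $\varphi=q_1^*\varphi_1+q_2^*\varphi_2$ ($q_i$ the projections). $\mathcal H^2_Q(\mathfrak l,\mathfrak a)_0$ denotes the set of admissible indecomposable classes, and $G_{(\mathfrak l,\mathfrak a)}=\mathrm{Aut}(\mathfrak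 l)\times O(\mathfrak a)$ acts by pull-back: $(S,U)^*(\alpha,\gamma)=(U\circ\alpha\circ(S\times S),\gamma\circ(S\times S\times S))$. *)

theory Defs
  imports "HOL-Analysis.Analysis"
begin

text \<open>Real Lie algebras of dimension 5 are modelled on the vector space real^5
  (index type 5, coordinates x$1,...,x$5), with a bracket br given as a function.\<close>

type_synonym vec5 = "real ^ 5"

definition form2 :: "(vec5 \<Rightarrow> vec5 \<Rightarrow> real) \<Rightarrow> bool" where
  "form2 b \<longleftrightarrow> bilinear b \<and> (\<forall>x y. b x y = - b y x)"

definition form3 :: "(vec5 \<Rightarrow> vec5 \<Rightarrow> vec5 \<Rightarrow> real) \<Rightarrow> bool" where
  "form3 g \<longleftrightarrow> (\<forall>y z. linear (\<lambda>x. g x y z)) \<and> (\<forall>x z. linear (\<lambda>y. g x y z))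
      \<and> (\<forall>x y. linear (\<lambda>z. g x y z))
      \<and> (\<forall>x y z. g x y z = - g y x z) \<and> (\<forall>x y z. g x y z = - g x z y)"

text \<open>Chevalley--Eilenberg differential, trivial real coefficients.\<close>
definition d2 :: "(vec5 \<Rightarrow> vec5 \<Rightarrow> vec5) \<Rightarrow> (vec5 \<Rightarrow> vec5 \<Rightarrow> real) \<Rightarrow> vec5 \<Rightarrow> vec5 \<Rightarrow> vec5 \<Rightarrow> real" where
  "d2 br b x0 x1 x2 = - b (br x0 x1) x2 + b (br x0 x2) x1 - b (br x1 x2) x0"

definition d3 :: "(vec5 \<Rightarrow> vec5 \<Rightarrow> vec5) \<Rightarrow> (vec5 \<Rightarrow> vec5 \<Rightarrow> vec5 \<Rightarrow> real)
    \<Rightarrow> vec5 \<Rightarrow> vec5 \<Rightarrow> vec5 \<Rightarrow> vec5 \<Rightarrow> real" where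
  "d3 br g x0 x1 x2 x3 =
     g (br x0 x1) x2 x3 - g (br x0 x2) x1 x3 + g (br x0 x3) x1 x2
   + g (br x1 x2) x0 x3 - g (br x1 x3) x0 x2 + g (br x2 x3) x0 x1"

definition closed3 :: "(vec5 \<Rightarrow> vec5 \<Rightarrow> vec5) \<Rightarrow> (vec5 \<Rightarrow> vec5 \<Rightarrow> vec5 \<Rightarrow> real) \<Rightarrow> bool" where
  "closed3 br g \<longleftrightarrow> form3 g \<and> (\<forall>w x y z. d3 br g w x y z = 0)"

definition exact3 :: "(vec5 \<Rightarrow> vec5 \<Rightarrow> vec5) \<Rightarrow> (vec5 \<Rightarrow> vec5 \<Rightarrow> vec5 \<Rightarrow> real) \<Rightarrow> bool" where
  "exact3 br g \<longleftrightarrow> (\<exists>b. form2 b \<and> (\<forall>x y z. g x y z = d2 br b x y z))"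

definition cohom :: "(vec5 \<Rightarrow> vec5 \<Rightarrow> vec5) \<Rightarrow> (vec5 \<Rightarrow> vec5 \<Rightarrow> vec5 \<Rightarrow> real)
    \<Rightarrow> (vec5 \<Rightarrow> vec5 \<Rightarrow> vec5 \<Rightarrow> real) \<Rightarrow> bool" where
  "cohom br g g' \<longleftrightarrow> exact3 br (\<lambda>x y z. g x y z - g' x y z)"

definition lie_aut :: "(vec5 \<Rightarrow> vec5 \<Rightarrow> vec5) \<Rightarrow> (vec5 \<Rightarrow> vec5) \<Rightarrow> bool" where
  "lie_aut br S \<longleftrightarrow> linear S \<and> bij S \<and> (\<forall>x y. S (br x y) = br (S x) (S y))"

definition pullback3 :: "(vec5 \<Rightarrow> vec5) \<Rightarrow> (vec5 \<Rightarrow> vec5 \<Rightarrow> vec5 \<Rightarrow> real) \<Rightarrow> vec5 \<Rightarrow> vec5 \<Rightarrow> vec5 \<Rightarrow> real" where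
  "pullback3 S g x y z = g (S x) (S y) (S z)"

text \<open>lower_central br k is l^(k+1): l^1 = l, l^(k+1) = [l, l^k].\<close>
primrec lower_central :: "(vec5 \<Rightarrow> vec5 \<Rightarrow> vec5) \<Rightarrow> nat \<Rightarrow> vec5 set" where
  "lower_central br 0 = UNIV"
| "lower_central br (Suc k) = span {br x y | x y. y \<in> lower_central br k}"

definition centre :: "(vec5 \<Rightarrow> vec5 \<Rightarrow> vec5) \<Rightarrow> vec5 set" where
  "centre br = {z. \<forall>x. br x z = 0}"

text \<open>Admissibility of [0,gamma]; l_(k) = z(l) \<inter> l^(k+1) (for k = 0 this is z(l)).
  For k > m the condition is vacuous since l^(k+1) = 0, so we quantify over all k.\<close>
definition admissible :: "(vec5 \<Rightarrow> vec5 \<Rightarrow> vec5) \<Rightarrow> (vec5 \<Rightarrow> vec5 \<Rightarrow> vec5 \<Rightarrow> real) \<Rightarrow> bool" where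
  "admissible br g \<longleftrightarrow>
     (\<forall>k L0. L0 \<in> centre br \<inter> lower_central br k
        \<longrightarrow> (\<exists>Z0 :: vec5 \<Rightarrow> real. linear Z0 \<and>
               (\<forall>L v. v \<in> lower_central br k \<longrightarrow> g L L0 v = Z0 (br L v)))
        \<longrightarrow> L0 = 0)"

definition lie_ideal :: "(vec5 \<Rightarrow> vec5 \<Rightarrow> vec5) \<Rightarrow> vec5 set \<Rightarrow> bool" where
  "lie_ideal br I \<longleftrightarrow> subspace I \<and> (\<forall>x a. a \<in> I \<longrightarrow> br x a \<in> I)"

text \<open>Decomposable class: l = l1 (+) l2 nontrivial Lie algebra direct sum (two nonzero
  complementary ideals), projections p1, p2, and cocycles g1 on l1, g2 on l2
  (3-forms on l whose restriction to l_i is closed for the bracket of l_i)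
  such that [g] = p1^*[g1] + p2^*[g2].\<close>
definition decomposable :: "(vec5 \<Rightarrow> vec5 \<Rightarrow> vec5) \<Rightarrow> (vec5 \<Rightarrow> vec5 \<Rightarrow> vec5 \<Rightarrow> real) \<Rightarrow> bool" where
  "decomposable br g \<longleftrightarrow>
    (\<exists>L1 L2 p1 p2 g1 g2.
       lie_ideal br L1 \<and> lie_ideal br L2 \<and> L1 \<noteq> {0} \<and> L2 \<noteq> {0} \<and> L1 \<inter> L2 = {0}
     \<and> (\<forall>x. p1 x \<in> L1 \<and> p2 x \<in> L2 \<and> x = p1 x + p2 x)
     \<and> form3 g1 \<and> (\<forall>w x y z. w \<in> L1 \<and> x \<in> L1 \<and> y \<in> L1 \<and> z \<in> L1 \<longrightarrow> d3 br g1 w x y z = 0)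
     \<and> form3 g2 \<and> (\<forall>w x y z. w \<in> L2 \<and> x \<in> L2 \<and> y \<in> L2 \<and> z \<in> L2 \<longrightarrow> d3 br g2 w x y z = 0)
     \<and> cohom br g (\<lambda>x y z. pullback3 p1 g1 x y z + pullback3 p2 g2 x y z))"

text \<open>Elements of H^2_Q(l,0)_0: admissible indecomposable classes (represented by cocycles).\<close>
definition HQ0 :: "(vec5 \<Rightarrow> vec5 \<Rightarrow> vec5) \<Rightarrow> (vec5 \<Rightarrow> vec5 \<Rightarrow> vec5 \<Rightarrow> real) \<Rightarrow> bool" where
  "HQ0 br g \<longleftrightarrow> closed3 br g \<and> admissible br g \<and> \<not> decomposable br g"

text \<open>[g] and [g'] lie in the same G-orbit (O(0) is trivial): S^*[g] = [g'].\<close>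
definition same_orbit :: "(vec5 \<Rightarrow> vec5 \<Rightarrow> vec5) \<Rightarrow> (vec5 \<Rightarrow> vec5 \<Rightarrow> vec5 \<Rightarrow> real)
    \<Rightarrow> (vec5 \<Rightarrow> vec5 \<Rightarrow> vec5 \<Rightarrow> real) \<Rightarrow> bool" where
  "same_orbit br g g' \<longleftrightarrow> (\<exists>S. lie_aut br S \<and> cohom br (pullback3 S g) g')"

definition wedge3 :: "(vec5 \<Rightarrow> real) \<Rightarrow> (vec5 \<Rightarrow> real) \<Rightarrow> (vec5 \<Rightarrow> real) \<Rightarrow> vec5 \<Rightarrow> vec5 \<Rightarrow> vec5 \<Rightarrow> real" where
  "wedge3 a b c x y z =
     a x * (b y * c z - b z * c y) - a y * (b x * c z - b z * c x) + a z * (b x * c y - b y * c x)"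

definition sigma :: "5 \<Rightarrow> vec5 \<Rightarrow> real" where
  "sigma i x = x $ i"

definition br_ab :: "vec5 \<Rightarrow> vec5 \<Rightarrow> vec5" where
  "br_ab x y = 0"

text \<open>g_{5,2}: coordinates 1,2,3,4,5 correspond to X1,X2,X3,Y,Z;
  [X1,X2] = Y, [X1,X3] = Z.\<close>
definition br_g52 :: "vec5 \<Rightarrow> vec5 \<Rightarrow> vec5" where
  "br_g52 x y = (\<chi> i. if i = 4 then x$1 * y$2 - x$2 * y$1
                      else if i = 5 then x$1 * y$3 - x$3 * y$1 else 0)"

end

theory Submission
  imports Defs
begin

lemma exhaust_5:
  fixes x :: 5
  shows "x = 1 \<or> x = 2 \<or> x = 3 \<or> x = 4 \<or> x = 5"
proof (induct x)
  case (of_int z)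
  then have "z = 0 \<or> z = 1 \<or> z = 2 \<or> z = 3 \<or> z = 4" by fastforce
  then show ?case by auto
qed

lemma UNIV_5: "UNIV = {1, 2, 3, 4, 5::5}"
  using exhaust_5 by auto

lemma sum_5: "sum f (UNIV::5 set) = f 1 + f 2 + f 3 + f 4 + f 5"
  unfolding UNIV_5 by (simp add: ac_simps)

definition e :: "5 \<Rightarrow> vec5" where "e i = axis i 1"

lemma e_nth[simp]: "e i $ j = (if j = i then 1 else 0)"
  by (simp add: e_def axis_def)

lemma vec5_expand: "x = x$1 *\<^sub>R e 1 + x$2 *\<^sub>R e 2 + x$3 *\<^sub>R e 3 + x$4 *\<^sub>R e 4 + x$5 *\<^sub>R e 5"
  by (simp add: vec_eq_iff) (metis exhaust_5)

lemma lin_expand: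
  assumes "linear f"
  shows "f x = x$1 *\<^sub>R f (e 1) + x$2 *\<^sub>R f (e 2) + x$3 *\<^sub>R f (e 3) + x$4 *\<^sub>R f (e 4) + x$5 *\<^sub>R f (e 5)"
proof -
  have "f x = f (x$1 *\<^sub>R e 1 + x$2 *\<^sub>R e 2 + x$3 *\<^sub>R e 3 + x$4 *\<^sub>R e 4 + x$5 *\<^sub>R e 5)"
    using vec5_expand[of x] by simp
  also have "\<dots> = x$1 *\<^sub>R f (e 1) + x$2 *\<^sub>R f (e 2) + x$3 *\<^sub>R f (e 3) + x$4 *\<^sub>R f (e 4) + x$5 *\<^sub>R f (e 5)" using assms by (simp add: linear_add linear_scale)
  finally show ?thesis .
qed

lemma form3_antisym:
  assumes "form3 g"
  shows "g x y z = - g y x z" "g x y z = - g x z y"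
  using assms unfolding form3_def by blast+

lemma form3_alt:
  assumes "form3 g"
  shows "g x x z = 0" "g x y y = 0" "g x y x = 0"
proof -
  show "g x x z = 0" using form3_antisym(1)[OF assms, of x x z] by simp
  show "g x y y = 0" using form3_antisym(2)[OF assms, of x y y] by simp
  have "g x y x = - g y x x" using form3_antisym(1)[OF assms] by blast
  also have "g y x x = 0" using form3_antisym(2)[OF assms, of y x x] by simp
  finally show "g x y x = 0" by simp
qed

lemma form3_swaps:
  assumes "form3 g"
  shows "g (e 2) (e 1) z = - g (e 1) (e 2) z" "g (e 3) (e 1) z = - g (e 1) (e 3) z"
   "g (e 4) (e 1) z = - g (e 1) (e 4) z" "g (e 5) (e 1) z = - g (e 1) (e 5) z"
   "g (e 3) (e 2) z = - g (e 2) (e 3) z" "g (e 4) (e 2) z = - g (e 2) (e 4) z"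
   "g (e 5) (e 2) z = - g (e 2) (e 5) z" "g (e 4) (e 3) z = - g (e 3) (e 4) z"
   "g (e 5) (e 3) z = - g (e 3) (e 5) z" "g (e 5) (e 4) z = - g (e 4) (e 5) z"
   "g x (e 2) (e 1) = - g x (e 1) (e 2)" "g x (e 3) (e 1) = - g x (e 1) (e 3)"
   "g x (e 4) (e 1) = - g x (e 1) (e 4)" "g x (e 5) (e 1) = - g x (e 1) (e 5)"
   "g x (e 3) (e 2) = - g x (e 2) (e 3)" "g x (e 4) (e 2) = - g x (e 2) (e 4)"
   "g x (e 5) (e 2) = - g x (e 2) (e 5)" "g x (e 4) (e 3) = - g x (e 3) (e 4)"
   "g x (e 5) (e 3) = - g x (e 3) (e 5)" "g x (e 5) (e 4) = - g x (e 4) (e 5)"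
  using form3_antisym[OF assms] by blast+

definition W10 :: "(vec5 \<Rightarrow> vec5 \<Rightarrow> vec5 \<Rightarrow> real) \<Rightarrow> vec5 \<Rightarrow> vec5 \<Rightarrow> vec5 \<Rightarrow> real" where
 "W10 g x y z =
    g (e 1) (e 2) (e 3) * wedge3 (sigma 1) (sigma 2) (sigma 3) x y z
  + g (e 1) (e 2) (e 4) * wedge3 (sigma 1) (sigma 2) (sigma 4) x y z
  + g (e 1) (e 2) (e 5) * wedge3 (sigma 1) (sigma 2) (sigma 5) x y z
  + g (e 1) (e 3) (e 4) * wedge3 (sigma 1) (sigma 3) (sigma 4) x y z
  + g (e 1) (e 3) (e 5) * wedge3 (sigma 1) (sigma 3) (sigma 5) x y z
  + g (e 1) (e 4) (e 5) * wedge3 (sigma 1) (sigma 4) (sigma 5) x y z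
  + g (e 2) (e 3) (e 4) * wedge3 (sigma 2) (sigma 3) (sigma 4) x y z
  + g (e 2) (e 3) (e 5) * wedge3 (sigma 2) (sigma 3) (sigma 5) x y z
  + g (e 2) (e 4) (e 5) * wedge3 (sigma 2) (sigma 4) (sigma 5) x y z
  + g (e 3) (e 4) (e 5) * wedge3 (sigma 3) (sigma 4) (sigma 5) x y z"

lemma alt2_expand:
  assumes l1: "\<And>z. linear (\<lambda>y. h y z)" and l2: "\<And>y. linear (\<lambda>z. h y z)"
   and a: "\<And>y z. h y z = - h z y"
  shows "h y z = h (e 1) (e 2) * (y$1*z$2 - y$2*z$1) + h (e 1) (e 3) * (y$1*z$3 - y$3*z$1)
   + h (e 1) (e 4) * (y$1*z$4 - y$4*z$1) + h (e 1) (e 5) * (y$1*z$5 - y$5*z$1)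
   + h (e 2) (e 3) * (y$2*z$3 - y$3*z$2) + h (e 2) (e 4) * (y$2*z$4 - y$4*z$2)
   + h (e 2) (e 5) * (y$2*z$5 - y$5*z$2) + h (e 3) (e 4) * (y$3*z$4 - y$4*z$3)
   + h (e 3) (e 5) * (y$3*z$5 - y$5*z$3) + h (e 4) (e 5) * (y$4*z$5 - y$5*z$4)"
proof -
  have A: "h y z = y$1 * h (e 1) z + y$2 * h (e 2) z + y$3 * h (e 3) z + y$4 * h (e 4) z + y$5 * h (e 5) z" for y z
    using lin_expand[OF l1[of z], of y] by simp
  have B: "h y z = z$1 * h y (e 1) + z$2 * h y (e 2) + z$3 * h y (e 3) + z$4 * h y (e 4) + z$5 * h y (e 5)" for y z
    using lin_expand[OF l2[of y], of z] by simp
  have d: "h x x = 0" for x using a[of x x] by simp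
  have s: "h (e 2) (e 1) = - h (e 1) (e 2)" "h (e 3) (e 1) = - h (e 1) (e 3)"
   "h (e 4) (e 1) = - h (e 1) (e 4)" "h (e 5) (e 1) = - h (e 1) (e 5)"
   "h (e 3) (e 2) = - h (e 2) (e 3)" "h (e 4) (e 2) = - h (e 2) (e 4)"
   "h (e 5) (e 2) = - h (e 2) (e 5)" "h (e 4) (e 3) = - h (e 3) (e 4)"
   "h (e 5) (e 3) = - h (e 3) (e 5)" "h (e 5) (e 4) = - h (e 4) (e 5)" by (rule a)+
  have B': "h (e i) z = z$1 * h (e i) (e 1) + z$2 * h (e i) (e 2) + z$3 * h (e i) (e 3) + z$4 * h (e i) (e 4) + z$5 * h (e i) (e 5)" for i
    by (rule B)
  show ?thesis
    unfolding A[of y z] B'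
    unfolding d s
    by (simp add: algebra_simps)
qed

lemma form3_expand:
  assumes g: "form3 g"
  shows "g x y z = W10 g x y z"
proof -
  have l1: "linear (\<lambda>x. g x y z)" for y z using g unfolding form3_def by blast
  have A: "g x y z = x$1 * g (e 1) y z + x$2 * g (e 2) y z + x$3 * g (e 3) y z + x$4 * g (e 4) y z + x$5 * g (e 5) y z"
    using lin_expand[OF l1[of y z], of x] by simp
  have B: "g (e i) y z = g (e i) (e 1) (e 2) * (y$1*z$2 - y$2*z$1) + g (e i) (e 1) (e 3) * (y$1*z$3 - y$3*z$1)
   + g (e i) (e 1) (e 4) * (y$1*z$4 - y$4*z$1) + g (e i) (e 1) (e 5) * (y$1*z$5 - y$5*z$1)
   + g (e i) (e 2) (e 3) * (y$2*z$3 - y$3*z$2) + g (e i) (e 2) (e 4) * (y$2*z$4 - y$4*z$2)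
   + g (e i) (e 2) (e 5) * (y$2*z$5 - y$5*z$2) + g (e i) (e 3) (e 4) * (y$3*z$4 - y$4*z$3)
   + g (e i) (e 3) (e 5) * (y$3*z$5 - y$5*z$3) + g (e i) (e 4) (e 5) * (y$4*z$5 - y$5*z$4)" for i
    apply (rule alt2_expand[where h="g (e i)"])
    using g unfolding form3_def by blast+
  show ?thesis
    unfolding A B
    unfolding form3_alt[OF g] form3_swaps[OF g]
    by (simp add: W10_def wedge3_def sigma_def algebra_simps)
qed


lemma br52_nth[simp]:
  "br_g52 x y $ 1 = 0" "br_g52 x y $ 2 = 0" "br_g52 x y $ 3 = 0"
  "br_g52 x y $ 4 = x$1 * y$2 - x$2 * y$1" "br_g52 x y $ 5 = x$1 * y$3 - x$3 * y$1"
  by (simp_all add: br_g52_def)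

lemma linear_sigma: "linear (sigma i)"
  by (rule linearI) (simp_all add: sigma_def)

lemma wedge3_lin1:
  assumes a: "linear a" and b: "linear b" and c: "linear c"
  shows "linear (\<lambda>x. wedge3 a b c x y z)"
proof (rule linearI)
  fix x x' show "wedge3 a b c (x + x') y z = wedge3 a b c x y z + wedge3 a b c x' y z"
    unfolding wedge3_def linear_add[OF a, of x x'] linear_add[OF b, of x x'] linear_add[OF c, of x x']
    by (simp add: algebra_simps)
next
  fix r x show "wedge3 a b c (r *\<^sub>R x) y z = r *\<^sub>R wedge3 a b c x y z"
    unfolding wedge3_def linear_scale[OF a, of r x] linear_scale[OF b, of r x] linear_scale[OF c, of r x]
    by (simp add: algebra_simps)
qed

lemma wedge3_swap12: "wedge3 a b c x y z = - wedge3 a b c y x z"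
  unfolding wedge3_def by (simp add: algebra_simps)
lemma wedge3_swap23: "wedge3 a b c x y z = - wedge3 a b c x z y"
  unfolding wedge3_def by (simp add: algebra_simps)

lemma form3_wedge3:
  assumes a: "linear a" and b: "linear b" and c: "linear c"
  shows "form3 (wedge3 a b c)"
proof -
  have l2: "linear (\<lambda>y. wedge3 a b c x y z)" for x z
  proof -
    have eq: "(\<lambda>y. wedge3 a b c x y z) = (\<lambda>y. - wedge3 a b c y x z)"
      by (rule ext) (rule wedge3_swap12)
    show ?thesis unfolding eq by (rule linear_compose_neg[OF wedge3_lin1[OF a b c]])
  qed
  have l3: "linear (\<lambda>z. wedge3 a b c x y z)" for x y
  proof -
    have eq: "(\<lambda>z. wedge3 a b c x y z) = (\<lambda>z. wedge3 a b c z x y)"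
      by (rule ext) (simp add: wedge3_def algebra_simps)
    show ?thesis unfolding eq by (rule wedge3_lin1[OF a b c])
  qed
  show ?thesis unfolding form3_def
    using wedge3_lin1[OF a b c] l2 l3 wedge3_swap12 wedge3_swap23 by blast
qed

lemma form3_lin1: "form3 g \<Longrightarrow> linear (\<lambda>x. g x y z)"
  unfolding form3_def by blast
lemma form3_lin2: "form3 g \<Longrightarrow> linear (\<lambda>y. g x y z)"
  unfolding form3_def by blast
lemma form3_lin3: "form3 g \<Longrightarrow> linear (\<lambda>z. g x y z)"
  unfolding form3_def by blast

lemma form3_add:
  assumes g: "form3 g" and h: "form3 h"
  shows "form3 (\<lambda>x y z. g x y z + h x y z)"
proof -
  note l1 = form3_lin1[OF g] form3_lin1[OF h]
  note l2 = form3_lin2[OF g] form3_lin2[OF h]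
  note l3 = form3_lin3[OF g] form3_lin3[OF h]
  show ?thesis unfolding form3_def
  proof (intro conjI allI)
    fix x y z
    show "linear (\<lambda>x. g x y z + h x y z)" by (rule linear_compose_add[OF l1(1) l1(2)])
    show "linear (\<lambda>y. g x y z + h x y z)" by (rule linear_compose_add[OF l2(1) l2(2)])
    show "linear (\<lambda>z. g x y z + h x y z)" by (rule linear_compose_add[OF l3(1) l3(2)])
    show "g x y z + h x y z = - (g y x z + h y x z)"
      using form3_antisym(1)[OF g, of x y z] form3_antisym(1)[OF h, of x y z] by simp
    show "g x y z + h x y z = - (g x z y + h x z y)"
      using form3_antisym(2)[OF g, of x y z] form3_antisym(2)[OF h, of x y z] by simp
  qed
qed


lemma lin_cmul: "linear f \<Longrightarrow> linear (\<lambda>x. c * (f x :: real))"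
  by (rule linear_compose_scale_right[of f c, unfolded real_scaleR_def])

lemma form3_scale:
  assumes g: "form3 g"
  shows "form3 (\<lambda>x y z. c * g x y z)"
proof -
  note l1 = form3_lin1[OF g] and l2 = form3_lin2[OF g] and l3 = form3_lin3[OF g]
  show ?thesis unfolding form3_def
  proof (intro conjI allI)
    fix x y z
    show "linear (\<lambda>x. c * g x y z)" by (rule lin_cmul[OF l1])
    show "linear (\<lambda>y. c * g x y z)" by (rule lin_cmul[OF l2])
    show "linear (\<lambda>z. c * g x y z)" by (rule lin_cmul[OF l3])
    show "c * g x y z = - (c * g y x z)"
      using form3_antisym(1)[OF g, of x y z] by simp
    show "c * g x y z = - (c * g x z y)"
      using form3_antisym(2)[OF g, of x y z] by simp
  qed
qed

lemma form3_diff: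
  assumes g: "form3 g" and h: "form3 h"
  shows "form3 (\<lambda>x y z. g x y z - h x y z)"
proof -
  have "form3 (\<lambda>x y z. g x y z + (-1) * h x y z)"
    by (rule form3_add[OF g form3_scale[OF h]])
  then show ?thesis by simp
qed

lemma form3_pullback:
  assumes S: "linear S" and g: "form3 g"
  shows "form3 (pullback3 S g)"
proof -
  note l1 = form3_lin1[OF g] and l2 = form3_lin2[OF g] and l3 = form3_lin3[OF g]
  show ?thesis unfolding form3_def pullback3_def
  proof (intro conjI allI)
    fix x y z
    show "linear (\<lambda>x. g (S x) (S y) (S z))"
      using linear_compose[OF S l1[of "S y" "S z"]] by (simp add: o_def)
    show "linear (\<lambda>y. g (S x) (S y) (S z))"
      using linear_compose[OF S l2[of "S x" "S z"]] by (simp add: o_def)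
    show "linear (\<lambda>z. g (S x) (S y) (S z))"
      using linear_compose[OF S l3[of "S x" "S y"]] by (simp add: o_def)
    show "g (S x) (S y) (S z) = - g (S y) (S x) (S z)"
      by (rule form3_antisym(1)[OF g])
    show "g (S x) (S y) (S z) = - g (S x) (S z) (S y)"
      by (rule form3_antisym(2)[OF g])
  qed
qed

lemma form3_zero:
  assumes g: "form3 g"
  shows "g 0 y z = 0" "g x 0 z = 0" "g x y 0 = 0"
  using linear_0[OF form3_lin1[OF g]] linear_0[OF form3_lin2[OF g]] linear_0[OF form3_lin3[OF g]]
  by auto

lemma form3_eqI:
  assumes g: "form3 g" and h: "form3 h"
    and "g (e 1) (e 2) (e 3) = h (e 1) (e 2) (e 3)"
    and "g (e 1) (e 2) (e 4) = h (e 1) (e 2) (e 4)"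
    and "g (e 1) (e 2) (e 5) = h (e 1) (e 2) (e 5)"
    and "g (e 1) (e 3) (e 4) = h (e 1) (e 3) (e 4)"
    and "g (e 1) (e 3) (e 5) = h (e 1) (e 3) (e 5)"
    and "g (e 1) (e 4) (e 5) = h (e 1) (e 4) (e 5)"
    and "g (e 2) (e 3) (e 4) = h (e 2) (e 3) (e 4)"
    and "g (e 2) (e 3) (e 5) = h (e 2) (e 3) (e 5)"
    and "g (e 2) (e 4) (e 5) = h (e 2) (e 4) (e 5)"
    and "g (e 3) (e 4) (e 5) = h (e 3) (e 4) (e 5)"
  shows "g x y z = h x y z"
  unfolding form3_expand[OF g, of x y z] form3_expand[OF h, of x y z]
  unfolding W10_def using assms(3-12) by simp

lemma form2_zero: "form2 (\<lambda>x y. 0)"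
  unfolding form2_def bilinear_def by (simp add: linear_zero)

lemma form2_add:
  assumes a: "form2 a" and b: "form2 b"
  shows "form2 (\<lambda>x y. a x y + b x y)"
proof -
  have la1: "linear (\<lambda>y. a x y)" for x using a unfolding form2_def bilinear_def by blast
  have la2: "linear (\<lambda>x. a x y)" for y using a unfolding form2_def bilinear_def by blast
  have aa: "a x y = - a y x" for x y using a unfolding form2_def by blast
  have lb1: "linear (\<lambda>y. b x y)" for x using b unfolding form2_def bilinear_def by blast
  have lb2: "linear (\<lambda>x. b x y)" for y using b unfolding form2_def bilinear_def by blast
  have ba: "b x y = - b y x" for x y using b unfolding form2_def by blast
  show ?thesis unfolding form2_def bilinear_def
  proof (intro conjI allI)
    fix x y
    show "linear (\<lambda>y. a x y + b x y)" by (rule linear_compose_add[OF la1 lb1])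
    show "linear (\<lambda>x. a x y + b x y)" by (rule linear_compose_add[OF la2 lb2])
    show "a x y + b x y = - (a y x + b y x)" using aa[of x y] ba[of x y] by simp
  qed
qed

lemma form2_pullback:
  assumes S: "linear S" and b: "form2 b"
  shows "form2 (\<lambda>x y. b (S x) (S y))"
proof -
  have bl: "bilinear b" using b unfolding form2_def by blast
  have an: "\<And>x y. b x y = - b y x" using b unfolding form2_def by blast
  have l1: "linear (\<lambda>y. b x y)" for x using bl unfolding bilinear_def by blast
  have l2: "linear (\<lambda>x. b x y)" for y using bl unfolding bilinear_def by blast
  show ?thesis unfolding form2_def bilinear_def
  proof (intro conjI allI)
    fix x y
    show "linear (\<lambda>y. b (S x) (S y))"
      using linear_compose[OF S l1[of "S x"]] by (simp add: o_def)
    show "linear (\<lambda>x. b (S x) (S y))"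
      using linear_compose[OF S l2[of "S y"]] by (simp add: o_def)
    show "b (S x) (S y) = - b (S y) (S x)" by (rule an)
  qed
qed

lemma d2_add: "d2 br (\<lambda>x y. a x y + b x y) x y z = d2 br a x y z + d2 br b x y z"
  unfolding d2_def by simp

lemma d2_zero: "d2 br (\<lambda>x y. 0) x y z = 0"
  unfolding d2_def by simp

lemma cohom_trans:
  assumes "cohom br g h" "cohom br h k"
  shows "cohom br g k"
proof -
  obtain a where a: "form2 a" "\<And>x y z. g x y z - h x y z = d2 br a x y z"
    using assms(1) unfolding cohom_def exact3_def by blast
  obtain b where b: "form2 b" "\<And>x y z. h x y z - k x y z = d2 br b x y z"
    using assms(2) unfolding cohom_def exact3_def by blast
  show ?thesis unfolding cohom_def exact3_def
  proof (intro exI conjI allI)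
    show "form2 (\<lambda>x y. a x y + b x y)" by (rule form2_add[OF a(1) b(1)])
    fix x y z
    have "g x y z - k x y z = (g x y z - h x y z) + (h x y z - k x y z)" by simp
    also have "\<dots> = d2 br (\<lambda>x y. a x y + b x y) x y z" unfolding d2_add a(2) b(2) ..
    finally show "g x y z - k x y z = d2 br (\<lambda>x y. a x y + b x y) x y z" .
  qed
qed

lemma cohom_pullback:
  assumes S: "lie_aut br S" and c: "cohom br g h"
  shows "cohom br (pullback3 S g) (pullback3 S h)"
proof -
  obtain a where a: "form2 a" "\<And>x y z. g x y z - h x y z = d2 br a x y z"
    using c unfolding cohom_def exact3_def by blast
  have lin: "linear S" and hom: "\<And>x y. S (br x y) = br (S x) (S y)"
    using S unfolding lie_aut_def by auto
  show ?thesis unfolding cohom_def exact3_def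
  proof (intro exI conjI allI)
    show "form2 (\<lambda>x y. a (S x) (S y))" by (rule form2_pullback[OF lin a(1)])
    fix x y z
    show "pullback3 S g x y z - pullback3 S h x y z = d2 br (\<lambda>x y. a (S x) (S y)) x y z"
      unfolding pullback3_def a(2) d2_def hom ..
  qed
qed

lemma lie_aut_comp:
  assumes S: "lie_aut br S" and T: "lie_aut br T"
  shows "lie_aut br (S \<circ> T)"
proof -
  have "linear S" "bij S" "\<And>x y. S (br x y) = br (S x) (S y)" using S unfolding lie_aut_def by auto
  moreover have "linear T" "bij T" "\<And>x y. T (br x y) = br (T x) (T y)" using T unfolding lie_aut_def by auto
  ultimately show ?thesis unfolding lie_aut_def
    by (simp add: linear_compose bij_comp)
qed

lemma same_orbit_trans:
  assumes "same_orbit br g h" "same_orbit br h k"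
  shows "same_orbit br g k"
proof -
  obtain S where S: "lie_aut br S" "cohom br (pullback3 S g) h"
    using assms(1) unfolding same_orbit_def by blast
  obtain T where T: "lie_aut br T" "cohom br (pullback3 T h) k"
    using assms(2) unfolding same_orbit_def by blast
  have eq: "pullback3 (S \<circ> T) g = pullback3 T (pullback3 S g)"
    by (simp add: pullback3_def fun_eq_iff)
  have "cohom br (pullback3 T (pullback3 S g)) (pullback3 T h)"
    by (rule cohom_pullback[OF T(1) S(2)])
  then have "cohom br (pullback3 (S \<circ> T) g) k"
    unfolding eq using T(2) by (rule cohom_trans)
  then show ?thesis unfolding same_orbit_def using lie_aut_comp[OF S(1) T(1)] by blast
qed

lemma orbit_of_pullback:
  assumes S: "lie_aut br S" and eq: "\<And>x y z. pullback3 S g x y z = h x y z"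
  shows "same_orbit br g h"
proof -
  have "cohom br (pullback3 S g) h" unfolding cohom_def exact3_def
  proof (intro exI conjI allI)
    show "form2 (\<lambda>x y. 0)" by (rule form2_zero)
    fix x y z show "pullback3 S g x y z - h x y z = d2 br (\<lambda>x y. 0) x y z"
      unfolding eq d2_zero by simp
  qed
  then show ?thesis unfolding same_orbit_def using S by blast
qed

lemma orbit_of_cohom:
  assumes "\<And>x y. br x y = br x y" "cohom br g h"
  shows "same_orbit br g h"
proof -
  have "lie_aut br id" unfolding lie_aut_def by (simp add: linear_id)
  moreover have "pullback3 id g = g" by (simp add: pullback3_def fun_eq_iff)
  ultimately show ?thesis unfolding same_orbit_def using assms(2) by metis
qed


lemma vec5_eqI:
  fixes u v :: vec5
  assumes "u$1 = v$1" "u$2 = v$2" "u$3 = v$3" "u$4 = v$4" "u$5 = v$5"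
  shows "u = v"
  unfolding vec_eq_iff using assms exhaust_5 by metis

lemma br52_expand: "br_g52 x y = (x$1*y$2 - x$2*y$1) *\<^sub>R e 4 + (x$1*y$3 - x$3*y$1) *\<^sub>R e 5"
  by (rule vec5_eqI) simp_all

lemma br52_central: "y$1 = 0 \<Longrightarrow> y$2 = 0 \<Longrightarrow> y$3 = 0 \<Longrightarrow> br_g52 x y = 0"
  by (rule vec5_eqI) simp_all

lemma br52_e [simp]:
  "br_g52 (e 1) (e 2) = e 4" "br_g52 (e 1) (e 3) = e 5"
  "br_g52 (e 2) (e 1) = - e 4" "br_g52 (e 3) (e 1) = - e 5"
  "br_g52 (e 1) (e 1) = 0" "br_g52 (e 1) (e 4) = 0" "br_g52 (e 1) (e 5) = 0"
  "br_g52 (e 2) (e 2) = 0" "br_g52 (e 2) (e 3) = 0" "br_g52 (e 2) (e 4) = 0" "br_g52 (e 2) (e 5) = 0"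
  "br_g52 (e 3) (e 2) = 0" "br_g52 (e 3) (e 3) = 0" "br_g52 (e 3) (e 4) = 0" "br_g52 (e 3) (e 5) = 0"
  "br_g52 (e 4) y = 0" "br_g52 (e 5) y = 0" "br_g52 y (e 4) = 0" "br_g52 y (e 5) = 0"
  by (rule vec5_eqI; simp)+

lemma linear_S_comp: "linear (\<lambda>x. (x :: vec5) $ i)"
  by (rule linearI) simp_all

lemma centre52: "L \<in> centre br_g52 \<Longrightarrow> L$1 = 0 \<and> L$2 = 0 \<and> L$3 = 0"
proof -
  assume "L \<in> centre br_g52"
  then have a: "br_g52 (e 1) L = 0" and b: "br_g52 (e 2) L = 0" unfolding centre_def by auto
  have "(br_g52 (e 1) L)$4 = 0" "(br_g52 (e 1) L)$5 = 0" "(br_g52 (e 2) L)$4 = 0"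
    using a b by simp_all
  then show ?thesis by simp
qed

definition C52 :: "vec5 set" where "C52 = {v. v$1 = 0 \<and> v$2 = 0 \<and> v$3 = 0}"

lemma subspace_C52: "subspace C52"
  unfolding subspace_def C52_def by simp

lemma lc52_sub: "lower_central br_g52 (Suc k) \<subseteq> C52"
  unfolding lower_central.simps
  by (rule span_minimal[OF _ subspace_C52]) (auto simp: C52_def)

lemma lc52_2: "lower_central br_g52 (Suc (Suc k)) \<subseteq> {0}"
proof -
  have "{br_g52 x y |x y. y \<in> lower_central br_g52 (Suc k)} \<subseteq> {0}"
    using lc52_sub[of k] br52_central unfolding C52_def by blast
  then have "span {br_g52 x y |x y. y \<in> lower_central br_g52 (Suc k)} \<subseteq> span {0}"
    by (rule span_mono)
  then show ?thesis by simp
qed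

lemma e4_lc1: "e 4 \<in> lower_central br_g52 (Suc 0)" and e5_lc1: "e 5 \<in> lower_central br_g52 (Suc 0)"
proof -
  have "e 4 \<in> {br_g52 x y |x y. y \<in> lower_central br_g52 0}"
    by (simp, rule exI[of _ "e 1"], rule exI[of _ "e 2"], simp)
  then show "e 4 \<in> lower_central br_g52 (Suc 0)" unfolding lower_central.simps(2) by (rule span_base)
  have "e 5 \<in> {br_g52 x y |x y. y \<in> lower_central br_g52 0}"
    by (simp, rule exI[of _ "e 1"], rule exI[of _ "e 3"], simp)
  then show "e 5 \<in> lower_central br_g52 (Suc 0)" unfolding lower_central.simps(2) by (rule span_base)
qed

lemma adm52:
  assumes H: "\<And>L0. L0$1 = 0 \<Longrightarrow> L0$2 = 0 \<Longrightarrow> L0$3 = 0 \<Longrightarrow> (\<And>L. g L L0 (e 4) = 0)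
                \<Longrightarrow> (\<And>L. g L L0 (e 5) = 0) \<Longrightarrow> L0 = 0"
  shows "admissible br_g52 g"
  unfolding admissible_def
proof (intro allI impI)
  fix k L0
  assume L0: "L0 \<in> centre br_g52 \<inter> lower_central br_g52 k"
    and "\<exists>Z0. linear Z0 \<and> (\<forall>L v. v \<in> lower_central br_g52 k \<longrightarrow> g L L0 v = Z0 (br_g52 L v))"
  then obtain Z0 where Z0: "linear Z0"
    and HZ: "\<And>L v. v \<in> lower_central br_g52 k \<Longrightarrow> g L L0 v = Z0 (br_g52 L v)" by blast
  have c: "L0$1 = 0" "L0$2 = 0" "L0$3 = 0" using centre52 L0 by auto
  have z: "Z0 0 = 0" by (rule linear_0[OF Z0])
  show "L0 = 0"
  proof (cases k)
    case 0
    show ?thesis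
    proof (rule H[OF c])
      fix L
      show "g L L0 (e 4) = 0" using HZ[of "e 4" L] z unfolding 0 by simp
      show "g L L0 (e 5) = 0" using HZ[of "e 5" L] z unfolding 0 by simp
    qed
  next
    case (Suc k')
    show ?thesis
    proof (cases k')
      case 0
      show ?thesis
      proof (rule H[OF c])
        fix L
        show "g L L0 (e 4) = 0" using HZ[of "e 4" L] z e4_lc1 unfolding Suc 0 by simp
        show "g L L0 (e 5) = 0" using HZ[of "e 5" L] z e5_lc1 unfolding Suc 0 by simp
      qed
    next
      case (Suc k'')
      then show ?thesis using L0 lc52_2[of k''] \<open>k = Suc k'\<close> by auto
    qed
  qed
qed


lemma ideal_e45:
  assumes I: "lie_ideal br_g52 I" and u: "u \<in> I" and u1: "u$1 \<noteq> 0"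
  shows "e 4 \<in> I" "e 5 \<in> I"
proof -
  have sI: "subspace I" using I unfolding lie_ideal_def by blast
  have b2: "br_g52 (e 2) u \<in> I" and b3: "br_g52 (e 3) u \<in> I" using I u unfolding lie_ideal_def by blast+
  have "br_g52 (e 2) u = (- u$1) *\<^sub>R e 4" by (rule vec5_eqI) simp_all
  then have eq4: "e 4 = (- 1 / u$1) *\<^sub>R br_g52 (e 2) u" using u1 by simp
  have "(- 1 / u$1) *\<^sub>R br_g52 (e 2) u \<in> I" by (rule subspace_scale[OF sI b2])
  then show "e 4 \<in> I" by (subst eq4)
  have "br_g52 (e 3) u = (- u$1) *\<^sub>R e 5" by (rule vec5_eqI) simp_all
  then have eq5: "e 5 = (- 1 / u$1) *\<^sub>R br_g52 (e 3) u" using u1 by simp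
  have "(- 1 / u$1) *\<^sub>R br_g52 (e 3) u \<in> I" by (rule subspace_scale[OF sI b3])
  then show "e 5 \<in> I" by (subst eq5)
qed

lemma e4_nz: "e 4 \<noteq> 0"
proof
  assume "e 4 = 0"
  then have "(e 4 :: vec5) $ 4 = (0 :: vec5) $ 4" by simp
  then show False by simp
qed

lemma one_side52:
  assumes I: "lie_ideal br_g52 I" and J: "lie_ideal br_g52 J" and IJ: "I \<inter> J = {0}"
    and u: "u \<in> I" and u1: "u$1 \<noteq> 0" and w: "w \<in> J"
  shows "w = 0"
proof -
  have sI: "subspace I" using I unfolding lie_ideal_def by blast
  have sJ: "subspace J" using J unfolding lie_ideal_def by blast
  note e45 = ideal_e45[OF I u u1]
  have w1: "w$1 = 0"
  proof (rule ccontr)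
    assume "w$1 \<noteq> 0"
    then have "e 4 \<in> J" using ideal_e45[OF J w] by blast
    then have "e 4 \<in> I \<inter> J" using e45 by blast
    then show False using IJ e4_nz by blast
  qed
  have bJ: "br_g52 u w \<in> J" using J w unfolding lie_ideal_def by blast
  have "br_g52 w u \<in> I" using I u unfolding lie_ideal_def by blast
  then have nI: "- br_g52 w u \<in> I" by (rule subspace_neg[OF sI])
  have eqb: "br_g52 u w = - br_g52 w u" by (rule vec5_eqI) simp_all
  have bI: "br_g52 u w \<in> I" by (subst eqb) (rule nI)
  have "br_g52 u w \<in> I \<inter> J" using bI bJ by blast
  then have bz: "br_g52 u w = 0" using IJ by blast
  have "(br_g52 u w)$4 = 0" "(br_g52 u w)$5 = 0" unfolding bz by simp_all
  then have "u$1 * w$2 = 0" "u$1 * w$3 = 0" using w1 by simp_all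
  then have w23: "w$2 = 0" "w$3 = 0" using u1 by simp_all
  have eqw: "w = (w$4) *\<^sub>R e 4 + (w$5) *\<^sub>R e 5" by (rule vec5_eqI) (simp_all add: w1 w23)
  have "(w$4) *\<^sub>R e 4 + (w$5) *\<^sub>R e 5 \<in> I"
    by (rule subspace_add[OF sI subspace_scale[OF sI e45(1)] subspace_scale[OF sI e45(2)]])
  then have "w \<in> I" by (subst eqw)
  then show "w = 0" using w IJ by blast
qed

lemma nondecomp52: "\<not> decomposable br_g52 g"
proof
  assume "decomposable br_g52 g"
  then obtain L1 L2 p1 p2 g1 g2 where D: "lie_ideal br_g52 L1 \<and> lie_ideal br_g52 L2 \<and> L1 \<noteq> {0} \<and> L2 \<noteq> {0} \<and> L1 \<inter> L2 = {0}
     \<and> (\<forall>x. p1 x \<in> L1 \<and> p2 x \<in> L2 \<and> x = p1 x + p2 x)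
     \<and> form3 g1 \<and> (\<forall>w x y z. w \<in> L1 \<and> x \<in> L1 \<and> y \<in> L1 \<and> z \<in> L1 \<longrightarrow> d3 br_g52 g1 w x y z = 0)
     \<and> form3 g2 \<and> (\<forall>w x y z. w \<in> L2 \<and> x \<in> L2 \<and> y \<in> L2 \<and> z \<in> L2 \<longrightarrow> d3 br_g52 g2 w x y z = 0)
     \<and> cohom br_g52 g (\<lambda>x y z. pullback3 p1 g1 x y z + pullback3 p2 g2 x y z)"
    unfolding decomposable_def by (elim exE) (rule that, assumption)
  have I: "lie_ideal br_g52 L1" using D by (elim conjE)
  have J: "lie_ideal br_g52 L2" using D by (elim conjE)
  have n1: "L1 \<noteq> {0}" using D by (elim conjE)
  have n2: "L2 \<noteq> {0}" using D by (elim conjE)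
  have IJ: "L1 \<inter> L2 = {0}" using D by (elim conjE)
  have p: "\<And>x. p1 x \<in> L1 \<and> p2 x \<in> L2 \<and> x = p1 x + p2 x" using D by (elim conjE) blast
  have sI: "subspace L1" using I unfolding lie_ideal_def by blast
  have sJ: "subspace L2" using J unfolding lie_ideal_def by blast
  have "\<exists>w. w \<in> L2 \<and> w \<noteq> 0"
  proof (rule ccontr)
    assume "\<not> (\<exists>w. w \<in> L2 \<and> w \<noteq> 0)"
    then have "L2 \<subseteq> {0}" by blast
    then show False using n2 subspace_0[OF sJ] by blast
  qed
  then obtain w where w: "w \<in> L2" "w \<noteq> 0" by blast
  have "\<exists>u. u \<in> L1 \<and> u \<noteq> 0"
  proof (rule ccontr)
    assume "\<not> (\<exists>u. u \<in> L1 \<and> u \<noteq> 0)"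
    then have "L1 \<subseteq> {0}" by blast
    then show False using n1 subspace_0[OF sI] by blast
  qed
  then obtain u where u: "u \<in> L1" "u \<noteq> 0" by blast
  have IJ': "L2 \<inter> L1 = {0}" using IJ by blast
  show False
  proof (cases "\<exists>u\<in>L1. u$1 \<noteq> 0")
    case True
    then obtain u' where "u' \<in> L1" "u'$1 \<noteq> 0" by blast
    then show False using one_side52[OF I J IJ _ _ w(1)] w(2) by blast
  next
    case False
    show False
    proof (cases "\<exists>w\<in>L2. w$1 \<noteq> 0")
      case True
      then obtain w' where "w' \<in> L2" "w'$1 \<noteq> 0" by blast
      then show False using one_side52[OF J I IJ' _ _ u(1)] u(2) by blast
    next
      case False2: False
      have a: "(p1 (e 1))$1 = 0" using False p by blast
      have b: "(p2 (e 1))$1 = 0" using False2 p by blast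
      have eq: "e 1 = p1 (e 1) + p2 (e 1)" using p by blast
      have "(p1 (e 1) + p2 (e 1))$1 = 1" unfolding eq[symmetric] by simp
      then have "(p1 (e 1))$1 + (p2 (e 1))$1 = 1" by simp
      then show False using a b by simp
    qed
  qed
qed

abbreviation "gam1 \<equiv> wedge3 (sigma 1) (sigma 4) (sigma 5)"
abbreviation "gam2 \<equiv> (\<lambda>x y z. wedge3 (sigma 1) (sigma 4) (sigma 5) x y z
                               + wedge3 (sigma 2) (sigma 3) (sigma 5) x y z)"

lemma form3_gam1: "form3 gam1"
  by (rule form3_wedge3[OF linear_sigma linear_sigma linear_sigma])

lemma form3_gam2: "form3 gam2"
  by (rule form3_add[OF form3_wedge3[OF linear_sigma linear_sigma linear_sigma]
                        form3_wedge3[OF linear_sigma linear_sigma linear_sigma]])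

lemma closed_gam1: "closed3 br_g52 gam1"
  unfolding closed3_def
proof (intro conjI allI)
  show "form3 gam1" by (rule form3_gam1)
  fix w x y z show "d3 br_g52 gam1 w x y z = 0"
    unfolding d3_def wedge3_def sigma_def br52_nth by algebra
qed

lemma closed_gam2: "closed3 br_g52 gam2"
  unfolding closed3_def
proof (intro conjI allI)
  show "form3 gam2" by (rule form3_gam2)
  fix w x y z show "d3 br_g52 gam2 w x y z = 0"
    unfolding d3_def wedge3_def sigma_def br52_nth by algebra
qed

lemma adm_gam1: "admissible br_g52 gam1"
proof (rule adm52)
  fix L0 :: vec5
  assume c: "L0$1 = 0" "L0$2 = 0" "L0$3 = 0"
    and h4: "\<And>L. gam1 L L0 (e 4) = 0" and h5: "\<And>L. gam1 L L0 (e 5) = 0"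
  have "gam1 (e 1) L0 (e 5) = L0$4" "gam1 (e 1) L0 (e 4) = - L0$5"
    by (simp_all add: wedge3_def sigma_def c)
  then have "L0$4 = 0" "L0$5 = 0" using h4 h5 by simp_all
  then show "L0 = 0" using c by (intro vec5_eqI) simp_all
qed

lemma adm_gam2: "admissible br_g52 gam2"
proof (rule adm52)
  fix L0 :: vec5
  assume c: "L0$1 = 0" "L0$2 = 0" "L0$3 = 0"
    and h4: "\<And>L. gam2 L L0 (e 4) = 0" and h5: "\<And>L. gam2 L L0 (e 5) = 0"
  have "gam2 (e 1) L0 (e 5) = L0$4" "gam2 (e 1) L0 (e 4) = - L0$5"
    by (simp_all add: wedge3_def sigma_def c)
  then have "L0$4 = 0" "L0$5 = 0" using h4 h5 by simp_all
  then show "L0 = 0" using c by (intro vec5_eqI) simp_all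
qed

lemma HQ0_gam1: "HQ0 br_g52 gam1"
  unfolding HQ0_def using closed_gam1 adm_gam1 nondecomp52 by blast

lemma HQ0_gam2: "HQ0 br_g52 gam2"
  unfolding HQ0_def using closed_gam2 adm_gam2 nondecomp52 by blast

lemma Q_gam1_zero:
  assumes "c$1 = 0"
  shows "gam1 P Q c * gam1 R T c - gam1 P R c * gam1 Q T c + gam1 P T c * gam1 Q R c = 0"
  unfolding wedge3_def sigma_def assms by algebra

lemma not_orbit_12: "\<not> same_orbit br_g52 gam1 gam2"
proof
  assume "same_orbit br_g52 gam1 gam2"
  then obtain S where S: "lie_aut br_g52 S" and c: "cohom br_g52 (pullback3 S gam1) gam2"
    unfolding same_orbit_def by blast
  obtain b where b: "form2 b" and hb: "\<And>x y z. pullback3 S gam1 x y z - gam2 x y z = d2 br_g52 b x y z"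
    using c unfolding cohom_def exact3_def by blast
  have bl: "bilinear b" using b unfolding form2_def by blast
  have ban: "b x y = - b y x" for x y using b unfolding form2_def by blast
  have b0: "b 0 y = 0" for y by (rule bilinear_lzero[OF bl])
  have b55: "b (e 5) (e 5) = 0" using ban[of "e 5" "e 5"] by simp
  have lin: "linear S" and bS: "bij S" and hom: "\<And>x y. S (br_g52 x y) = br_g52 (S x) (S y)"
    using S unfolding lie_aut_def by auto
  define c where "c = S (e 5)"
  have cc: "br_g52 x c = 0" for x
  proof -
    obtain x' where "x = S x'" using bS by (metis bij_pointE)
    then show ?thesis unfolding c_def using hom[of x' "e 5"] linear_0[OF lin] by simp
  qed
  have "(br_g52 (e 2) c)$4 = 0" using cc by simp
  then have c1: "c$1 = 0" by simp
  define om where "om x y = gam2 x y (e 5) + d2 br_g52 b x y (e 5)" for x y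
  have om: "gam1 (S x) (S y) c = om x y" for x y
    using hb[of x y "e 5"] unfolding om_def pullback3_def c_def by simp
  have "om (e 1) (e 4) * om (e 2) (e 3) - om (e 1) (e 2) * om (e 4) (e 3) + om (e 1) (e 3) * om (e 4) (e 2) = 0"
    unfolding om[symmetric] by (rule Q_gam1_zero[OF c1])
  moreover have "om (e 1) (e 4) = 1" "om (e 2) (e 3) = 1" "om (e 4) (e 3) = 0" "om (e 1) (e 3) = 0"
    unfolding om_def d2_def by (simp_all add: wedge3_def sigma_def b0 b55)
  ultimately show False by simp
qed


lemma form3_lin_simps:
  assumes g: "form3 g"
  shows "g (x + y) z w = g x z w + g y z w" "g (c *\<^sub>R x) z w = c * g x z w"
    "g z (x + y) w = g z x w + g z y w" "g z (c *\<^sub>R x) w = c * g z x w"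
    "g z w (x + y) = g z w x + g z w y" "g z w (c *\<^sub>R x) = c * g z w x"
  using linear_add[OF form3_lin1[OF g]] linear_scale[OF form3_lin1[OF g]]
    linear_add[OF form3_lin2[OF g]] linear_scale[OF form3_lin2[OF g]]
    linear_add[OF form3_lin3[OF g]] linear_scale[OF form3_lin3[OF g]]
  by simp_all

definition F10 :: "real \<Rightarrow> real \<Rightarrow> real \<Rightarrow> real \<Rightarrow> real \<Rightarrow> real \<Rightarrow> real \<Rightarrow> real \<Rightarrow> real \<Rightarrow> real
   \<Rightarrow> vec5 \<Rightarrow> vec5 \<Rightarrow> vec5 \<Rightarrow> real" where
 "F10 k1 k2 k3 k4 k5 k6 k7 k8 k9 k10 x y z =
    k1 * wedge3 (sigma 1) (sigma 2) (sigma 3) x y z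
  + k2 * wedge3 (sigma 1) (sigma 2) (sigma 4) x y z
  + k3 * wedge3 (sigma 1) (sigma 2) (sigma 5) x y z
  + k4 * wedge3 (sigma 1) (sigma 3) (sigma 4) x y z
  + k5 * wedge3 (sigma 1) (sigma 3) (sigma 5) x y z
  + k6 * wedge3 (sigma 1) (sigma 4) (sigma 5) x y z
  + k7 * wedge3 (sigma 2) (sigma 3) (sigma 4) x y z
  + k8 * wedge3 (sigma 2) (sigma 3) (sigma 5) x y z
  + k9 * wedge3 (sigma 2) (sigma 4) (sigma 5) x y z
  + k10 * wedge3 (sigma 3) (sigma 4) (sigma 5) x y z"

lemma form3_F10: "form3 (F10 k1 k2 k3 k4 k5 k6 k7 k8 k9 k10)"
proof -
  have w: "form3 (wedge3 (sigma i) (sigma j) (sigma k))" for i j k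
    by (rule form3_wedge3[OF linear_sigma linear_sigma linear_sigma])
  have "form3 (\<lambda>x y z. k1 * wedge3 (sigma 1) (sigma 2) (sigma 3) x y z
  + k2 * wedge3 (sigma 1) (sigma 2) (sigma 4) x y z
  + k3 * wedge3 (sigma 1) (sigma 2) (sigma 5) x y z
  + k4 * wedge3 (sigma 1) (sigma 3) (sigma 4) x y z
  + k5 * wedge3 (sigma 1) (sigma 3) (sigma 5) x y z
  + k6 * wedge3 (sigma 1) (sigma 4) (sigma 5) x y z
  + k7 * wedge3 (sigma 2) (sigma 3) (sigma 4) x y z
  + k8 * wedge3 (sigma 2) (sigma 3) (sigma 5) x y z
  + k9 * wedge3 (sigma 2) (sigma 4) (sigma 5) x y z
  + k10 * wedge3 (sigma 3) (sigma 4) (sigma 5) x y z)"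
    by (intro form3_add form3_scale w)
  then show ?thesis unfolding F10_def[abs_def] .
qed

lemma F10_e:
  "F10 k1 k2 k3 k4 k5 k6 k7 k8 k9 k10 (e 1) (e 2) (e 3) = k1"
  "F10 k1 k2 k3 k4 k5 k6 k7 k8 k9 k10 (e 1) (e 2) (e 4) = k2"
  "F10 k1 k2 k3 k4 k5 k6 k7 k8 k9 k10 (e 1) (e 2) (e 5) = k3"
  "F10 k1 k2 k3 k4 k5 k6 k7 k8 k9 k10 (e 1) (e 3) (e 4) = k4"
  "F10 k1 k2 k3 k4 k5 k6 k7 k8 k9 k10 (e 1) (e 3) (e 5) = k5"
  "F10 k1 k2 k3 k4 k5 k6 k7 k8 k9 k10 (e 1) (e 4) (e 5) = k6"
  "F10 k1 k2 k3 k4 k5 k6 k7 k8 k9 k10 (e 2) (e 3) (e 4) = k7"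
  "F10 k1 k2 k3 k4 k5 k6 k7 k8 k9 k10 (e 2) (e 3) (e 5) = k8"
  "F10 k1 k2 k3 k4 k5 k6 k7 k8 k9 k10 (e 2) (e 4) (e 5) = k9"
  "F10 k1 k2 k3 k4 k5 k6 k7 k8 k9 k10 (e 3) (e 4) (e 5) = k10"
  by (simp_all add: F10_def wedge3_def sigma_def)

lemma gam1_F10: "gam1 x y z = F10 0 0 0 0 0 1 0 0 0 0 x y z"
  by (simp add: F10_def)
lemma gam2_F10: "gam2 x y z = F10 0 0 0 0 0 1 0 1 0 0 x y z"
  by (simp add: F10_def)

lemma aut52I:
  assumes lin: "linear S" and ker: "\<And>x. S x = 0 \<Longrightarrow> x = 0"
    and hom: "\<And>x y. S (br_g52 x y) = br_g52 (S x) (S y)"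
  shows "lie_aut br_g52 S"
proof -
  have "inj S" using ker linear_injective_0[OF lin] by blast
  moreover then have "surj S" by (rule linear_inj_imp_surj[OF lin])
  ultimately show ?thesis unfolding lie_aut_def bij_def using lin hom by blast
qed

definition sh52 :: "real \<Rightarrow> real \<Rightarrow> real \<Rightarrow> vec5 \<Rightarrow> vec5" where
  "sh52 p q r x = x + (q * x$3) *\<^sub>R e 4 + (p * x$2 + r * x$3) *\<^sub>R e 5"

lemma sh52_nth[simp]:
  "sh52 p q r x $ 1 = x$1" "sh52 p q r x $ 2 = x$2" "sh52 p q r x $ 3 = x$3"
  "sh52 p q r x $ 4 = x$4 + q * x$3" "sh52 p q r x $ 5 = x$5 + p * x$2 + r * x$3"
  by (simp_all add: sh52_def)

lemma sh52_aut: "lie_aut br_g52 (sh52 p q r)"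
proof (rule aut52I)
  show "linear (sh52 p q r)"
    by (rule linearI; rule vec5_eqI) (simp_all add: algebra_simps)
  fix x assume "sh52 p q r x = 0"
  then have "sh52 p q r x $ i = 0" for i by simp
  from this[of 1] this[of 2] this[of 3] this[of 4] this[of 5]
  show "x = 0" by (intro vec5_eqI) simp_all
next
  fix x y show "sh52 p q r (br_g52 x y) = br_g52 (sh52 p q r x) (sh52 p q r y)"
    by (rule vec5_eqI) simp_all
qed

lemma sh52_e:
  "sh52 p q r (e 1) = e 1" "sh52 p q r (e 2) = e 2 + p *\<^sub>R e 5"
  "sh52 p q r (e 3) = e 3 + q *\<^sub>R e 4 + r *\<^sub>R e 5"
  "sh52 p q r (e 4) = e 4" "sh52 p q r (e 5) = e 5"
  by (rule vec5_eqI; simp)+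

definition gl52 :: "real \<Rightarrow> real \<Rightarrow> real \<Rightarrow> real \<Rightarrow> vec5 \<Rightarrow> vec5" where
  "gl52 a b c d x = x$1 *\<^sub>R e 1 + (a*x$2 + b*x$3) *\<^sub>R e 2 + (c*x$2 + d*x$3) *\<^sub>R e 3
      + (a*x$4 + b*x$5) *\<^sub>R e 4 + (c*x$4 + d*x$5) *\<^sub>R e 5"

lemma gl52_nth[simp]:
  "gl52 a b c d x $ 1 = x$1" "gl52 a b c d x $ 2 = a*x$2 + b*x$3" "gl52 a b c d x $ 3 = c*x$2 + d*x$3"
  "gl52 a b c d x $ 4 = a*x$4 + b*x$5" "gl52 a b c d x $ 5 = c*x$4 + d*x$5"
  by (simp_all add: gl52_def)

lemma det2_zero:
  fixes a b c d u v :: real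
  assumes "a*u + b * v = 0" "c*u + d * v = 0" "a*d - b*c \<noteq> 0"
  shows "u = 0" "v = 0"
proof -
  have "u * (a*d - b*c) = d*(a*u + b * v) - b*(c*u + d * v)" by (simp add: algebra_simps)
  then show "u = 0" using assms by simp
  have "v * (a*d - b*c) = a*(c*u + d * v) - c*(a*u + b * v)" by (simp add: algebra_simps)
  then show "v = 0" using assms by simp
qed

lemma gl52_aut:
  assumes det: "a*d - b*c \<noteq> 0"
  shows "lie_aut br_g52 (gl52 a b c d)"
proof (rule aut52I)
  show "linear (gl52 a b c d)"
    by (rule linearI; rule vec5_eqI) (simp_all add: algebra_simps)
  fix x assume "gl52 a b c d x = 0"
  then have "gl52 a b c d x $ i = 0" for i by simp
  from this[of 1] this[of 2] this[of 3] this[of 4] this[of 5]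
  have h: "x$1 = 0" "a*x$2 + b*x$3 = 0" "c*x$2 + d*x$3 = 0" "a*x$4 + b*x$5 = 0" "c*x$4 + d*x$5 = 0"
    by simp_all
  show "x = 0" using h(1) det2_zero[OF h(2) h(3) det] det2_zero[OF h(4) h(5) det]
    by (intro vec5_eqI) simp_all
next
  fix x y show "gl52 a b c d (br_g52 x y) = br_g52 (gl52 a b c d x) (gl52 a b c d y)"
    by (rule vec5_eqI) (simp_all add: algebra_simps)
qed


lemma stepA:
  assumes g: "form3 g" and z1: "g (e 2) (e 4) (e 5) = 0" and z2: "g (e 3) (e 4) (e 5) = 0"
    and l: "g (e 1) (e 4) (e 5) \<noteq> 0"
  shows "same_orbit br_g52 g (F10 0 0 0 0 0 (g (e 1) (e 4) (e 5)) (g (e 2) (e 3) (e 4)) (g (e 2) (e 3) (e 5)) 0 0)"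
proof -
  define lam where "lam = g (e 1) (e 4) (e 5)"
  define p where "p = g (e 1) (e 2) (e 4) / lam"
  define q where "q = - g (e 1) (e 3) (e 5) / lam"
  define r where "r = (g (e 1) (e 3) (e 4) + g (e 1) (e 2) (e 5)) / lam"
  define t1 where "t1 = - (g (e 1) (e 2) (e 3) + q * g (e 1) (e 2) (e 4) + r * g (e 1) (e 2) (e 5)
                          - p * g (e 1) (e 3) (e 5) - p * q * lam)"
  define t2 where "t2 = - g (e 1) (e 2) (e 5)"
  define S where "S = sh52 p q r"
  define b where "b x y = t1 * (x$4 * y$3 - x$3 * y$4) + t2 * (x$4 * y$5 - x$5 * y$4)" for x y :: vec5
  have lam0: "lam \<noteq> 0" using l unfolding lam_def .
  have fb: "form2 b"
    unfolding form2_def bilinear_def b_def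
    by (intro conjI allI linearI) (simp_all add: algebra_simps)
  have d2b: "d2 br_g52 b x y z = F10 (- t1) 0 (- t2) t2 0 0 0 0 0 0 x y z" for x y z
    unfolding d2_def b_def F10_def wedge3_def sigma_def br52_nth by algebra
  note gs = form3_lin_simps[OF g] form3_alt[OF g] form3_swaps[OF g] form3_zero[OF g]
  have P: "pullback3 S g x y z = F10 (- t1) 0 (- t2) t2 0 lam (g (e 2) (e 3) (e 4)) (g (e 2) (e 3) (e 5)) 0 0 x y z" for x y z
  proof (rule form3_eqI[OF form3_pullback[OF _ g] form3_F10])
    show "linear S" using sh52_aut unfolding S_def lie_aut_def by blast
  qed (simp_all add: pullback3_def S_def sh52_e gs F10_e z1 z2 t1_def t2_def lam_def[symmetric],
       simp_all add: p_def q_def r_def field_simps lam0)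
  have "cohom br_g52 (pullback3 S g) (F10 0 0 0 0 0 lam (g (e 2) (e 3) (e 4)) (g (e 2) (e 3) (e 5)) 0 0)"
    unfolding cohom_def exact3_def
  proof (intro exI conjI allI)
    show "form2 b" by (rule fb)
    fix x y z show "pullback3 S g x y z - F10 0 0 0 0 0 lam (g (e 2) (e 3) (e 4)) (g (e 2) (e 3) (e 5)) 0 0 x y z
        = d2 br_g52 b x y z"
      unfolding P d2b by (simp add: F10_def algebra_simps)
  qed
  then show ?thesis unfolding same_orbit_def lam_def using sh52_aut unfolding S_def by blast
qed

lemma stepB1:
  assumes l: "lam \<noteq> 0"
  shows "same_orbit br_g52 (F10 0 0 0 0 0 lam 0 0 0 0) gam1"
proof (rule orbit_of_pullback[OF gl52_aut[of "1/lam" 1 0 0]])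
  show "1 / lam * 1 - 0 * 0 \<noteq> 0" using l by simp
  fix x y z
  show "pullback3 (gl52 (1 / lam) 0 0 1) (F10 0 0 0 0 0 lam 0 0 0 0) x y z = gam1 x y z"
    unfolding gam1_F10
  proof (rule form3_eqI[OF form3_pullback[OF _ form3_F10] form3_F10])
    show "linear (gl52 (1 / lam) 0 0 1)" using gl52_aut[of "1/lam" 1 0 0] l unfolding lie_aut_def by simp
  qed (simp_all add: pullback3_def F10_def wedge3_def sigma_def l)
qed

lemma stepB2:
  assumes l: "lam \<noteq> 0" and cd: "c \<noteq> 0 \<or> d \<noteq> 0"
  shows "same_orbit br_g52 (F10 0 0 0 0 0 lam c d 0 0) gam2"
proof -
  define N where "N = c*c + d*d"
  have N0: "N \<noteq> 0" using cd unfolding N_def by (metis add_nonneg_eq_0_iff mult_eq_0_iff zero_le_square)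
  define A where "A = d / (lam*lam)"
  define B where "B = lam * c / N"
  define C where "C = - c / (lam*lam)"
  define D where "D = lam * d / N"
  have AD: "A * D = d*d / (lam * N)" unfolding A_def D_def using l N0 by (simp add: field_simps)
  have BC: "B * C = - (c*c) / (lam * N)" unfolding B_def C_def using l N0 by (simp add: field_simps)
  have "A * D - B * C = (d*d + c*c) / (lam * N)" unfolding AD BC by (simp add: add_divide_distrib diff_divide_distrib)
  also have "d*d + c*c = N" unfolding N_def by simp
  also have "N / (lam * N) = 1 / lam" using N0 by simp
  finally have det: "A * D - B * C = 1 / lam" .
  have det0: "A * D - B * C \<noteq> 0" unfolding det using l by simp
  show ?thesis
  proof (rule orbit_of_pullback[OF gl52_aut[OF det0]])
    fix x y z
    show "pullback3 (gl52 A B C D) (F10 0 0 0 0 0 lam c d 0 0) x y z = gam2 x y z"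
      unfolding gam2_F10
    proof (rule form3_eqI[OF form3_pullback[OF _ form3_F10] form3_F10])
      show "linear (gl52 A B C D)" using gl52_aut[OF det0] unfolding lie_aut_def by simp
    qed (simp_all add: pullback3_def F10_def wedge3_def sigma_def,
         simp_all add: A_def B_def C_def D_def field_simps l N0, simp_all add: N_def algebra_simps)
  qed
qed

lemma d3_e_zero:
  assumes g: "form3 g" and d: "\<forall>w x y z. d3 br_g52 g w x y z = 0"
  shows "g (e 2) (e 4) (e 5) = 0" "g (e 3) (e 4) (e 5) = 0"
proof -
  note gs = form3_alt[OF g] form3_swaps[OF g] form3_zero[OF g]
  have "d3 br_g52 g (e 1) (e 2) (e 3) (e 4) = 0" using d by blast
  then show "g (e 2) (e 4) (e 5) = 0" unfolding d3_def by (simp add: gs)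
  have "d3 br_g52 g (e 1) (e 2) (e 3) (e 5) = 0" using d by blast
  then show "g (e 3) (e 4) (e 5) = 0" unfolding d3_def by (simp add: gs)
qed

lemma adm_lam:
  assumes g: "form3 g" and z1: "g (e 2) (e 4) (e 5) = 0" and z2: "g (e 3) (e 4) (e 5) = 0"
    and a: "admissible br_g52 g"
  shows "g (e 1) (e 4) (e 5) \<noteq> 0"
proof
  assume z0: "g (e 1) (e 4) (e 5) = 0"
  note gs = form3_lin_simps[OF g] form3_alt[OF g] form3_swaps[OF g] form3_zero[OF g]
  have cen: "e 4 \<in> centre br_g52" unfolding centre_def by simp
  have key: "g L (e 4) v = 0" if v: "v \<in> lower_central br_g52 (Suc 0)" for L v
  proof -
    have "v \<in> C52" using lc52_sub[of 0] v by blast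
    then have "v = (v$4) *\<^sub>R e 4 + (v$5) *\<^sub>R e 5" unfolding C52_def by (intro vec5_eqI) simp_all
    then have "g L (e 4) v = v$5 * g L (e 4) (e 5)"
      by (metis (no_types, lifting) gs(5) gs(6) gs(8) mult_zero_right add_0)
    also have "g L (e 4) (e 5) = L$1 * g (e 1) (e 4) (e 5) + L$2 * g (e 2) (e 4) (e 5) + L$3 * g (e 3) (e 4) (e 5)
         + L$4 * g (e 4) (e 4) (e 5) + L$5 * g (e 5) (e 4) (e 5)"
      using lin_expand[OF form3_lin1[OF g, of "e 4" "e 5"], of L] by simp
    also have "\<dots> = 0" using z0 z1 z2 by (simp add: gs)
    finally show ?thesis by simp
  qed
  have "e 4 = (0 :: vec5)"
    using a unfolding admissible_def
    apply (elim allE[of _ "Suc 0"] allE[of _ "e 4"])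
    apply (erule impE)
     apply (rule IntI[OF cen e4_lc1])
    apply (erule impE)
     apply (rule exI[of _ "\<lambda>_. 0"])
     apply (simp add: linear_zero key)
    apply assumption
    done
  then show False using e4_nz by blast
qed

lemma class52:
  assumes H: "HQ0 br_g52 g"
  shows "same_orbit br_g52 g gam1 \<or> same_orbit br_g52 g gam2"
proof -
  have cl: "closed3 br_g52 g" and a: "admissible br_g52 g" using H unfolding HQ0_def by blast+
  have g: "form3 g" and d: "\<forall>w x y z. d3 br_g52 g w x y z = 0" using cl unfolding closed3_def by blast+
  note z = d3_e_zero[OF g d]
  have l: "g (e 1) (e 4) (e 5) \<noteq> 0" by (rule adm_lam[OF g z a])
  note A = stepA[OF g z l]
  show ?thesis
  proof (cases "g (e 2) (e 3) (e 4) = 0 \<and> g (e 2) (e 3) (e 5) = 0")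
    case True
    then have "same_orbit br_g52 g (F10 0 0 0 0 0 (g (e 1) (e 4) (e 5)) 0 0 0 0)" using A by simp
    then show ?thesis using stepB1[OF l] same_orbit_trans by blast
  next
    case False
    then have "g (e 2) (e 3) (e 4) \<noteq> 0 \<or> g (e 2) (e 3) (e 5) \<noteq> 0" by blast
    then show ?thesis using A stepB2[OF l] same_orbit_trans by blast
  qed
qed


definition Pf :: "(vec5 \<Rightarrow> vec5 \<Rightarrow> vec5 \<Rightarrow> real) \<Rightarrow> 5 \<Rightarrow> real" where
  "Pf g m = (if m = 1 then (g (e 1) (e 2) (e 3) * g (e 1) (e 4) (e 5) - g (e 1) (e 2) (e 4) * g (e 1) (e 3) (e 5) + g (e 1) (e 2) (e 5) * g (e 1) (e 3) (e 4))
   else if m = 2 then (- g (e 1) (e 2) (e 3) * g (e 2) (e 4) (e 5) + g (e 1) (e 2) (e 4) * g (e 2) (e 3) (e 5) - g (e 1) (e 2) (e 5) * g (e 2) (e 3) (e 4))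
   else if m = 3 then (g (e 1) (e 2) (e 3) * g (e 3) (e 4) (e 5) - g (e 1) (e 3) (e 4) * g (e 2) (e 3) (e 5) + g (e 1) (e 3) (e 5) * g (e 2) (e 3) (e 4))
   else if m = 4 then (- g (e 1) (e 2) (e 4) * g (e 3) (e 4) (e 5) + g (e 1) (e 3) (e 4) * g (e 2) (e 4) (e 5) - g (e 1) (e 4) (e 5) * g (e 2) (e 3) (e 4))
   else (g (e 1) (e 2) (e 5) * g (e 3) (e 4) (e 5) - g (e 1) (e 3) (e 5) * g (e 2) (e 4) (e 5) + g (e 1) (e 4) (e 5) * g (e 2) (e 3) (e 5)))"

definition xi :: "(vec5 \<Rightarrow> vec5 \<Rightarrow> vec5 \<Rightarrow> real) \<Rightarrow> vec5 \<Rightarrow> real" where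
  "xi g v = v$1 * Pf g 1 - v$2 * Pf g 2 + v$3 * Pf g 3 - v$4 * Pf g 4 + v$5 * Pf g 5"

lemma linear_xi: "linear (xi g)"
  by (rule linearI) (simp_all add: xi_def algebra_simps)

lemma xi_e: "xi g (e 1) = Pf g 1" "xi g (e 2) = - Pf g 2" "xi g (e 3) = Pf g 3"
  "xi g (e 4) = - Pf g 4" "xi g (e 5) = Pf g 5"
  by (simp_all add: xi_def)

lemma form3_from_2:
  assumes g: "form3 g"
    and "g u (e 1) (e 2) = 0" "g u (e 1) (e 3) = 0" "g u (e 1) (e 4) = 0" "g u (e 1) (e 5) = 0"
        "g u (e 2) (e 3) = 0" "g u (e 2) (e 4) = 0" "g u (e 2) (e 5) = 0" "g u (e 3) (e 4) = 0"
        "g u (e 3) (e 5) = 0" "g u (e 4) (e 5) = 0"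
  shows "g u x y = 0"
proof -
  have "g u x y = g u (e 1) (e 2) * (x$1*y$2 - x$2*y$1) + g u (e 1) (e 3) * (x$1*y$3 - x$3*y$1)
   + g u (e 1) (e 4) * (x$1*y$4 - x$4*y$1) + g u (e 1) (e 5) * (x$1*y$5 - x$5*y$1)
   + g u (e 2) (e 3) * (x$2*y$3 - x$3*y$2) + g u (e 2) (e 4) * (x$2*y$4 - x$4*y$2)
   + g u (e 2) (e 5) * (x$2*y$5 - x$5*y$2) + g u (e 3) (e 4) * (x$3*y$4 - x$4*y$3)
   + g u (e 3) (e 5) * (x$3*y$5 - x$5*y$3) + g u (e 4) (e 5) * (x$4*y$5 - x$5*y$4)"
    by (rule alt2_expand[where h="g u"]) (use g in \<open>unfold form3_def\<close>, blast+)
  then show ?thesis using assms(2-11) by simp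
qed

lemma Pf_eqs:
  "Pf g 1 = g (e 1) (e 2) (e 3) * g (e 1) (e 4) (e 5) - g (e 1) (e 2) (e 4) * g (e 1) (e 3) (e 5) + g (e 1) (e 2) (e 5) * g (e 1) (e 3) (e 4)"
  "Pf g 2 = - g (e 1) (e 2) (e 3) * g (e 2) (e 4) (e 5) + g (e 1) (e 2) (e 4) * g (e 2) (e 3) (e 5) - g (e 1) (e 2) (e 5) * g (e 2) (e 3) (e 4)"
  "Pf g 3 = g (e 1) (e 2) (e 3) * g (e 3) (e 4) (e 5) - g (e 1) (e 3) (e 4) * g (e 2) (e 3) (e 5) + g (e 1) (e 3) (e 5) * g (e 2) (e 3) (e 4)"
  "Pf g 4 = - g (e 1) (e 2) (e 4) * g (e 3) (e 4) (e 5) + g (e 1) (e 3) (e 4) * g (e 2) (e 4) (e 5) - g (e 1) (e 4) (e 5) * g (e 2) (e 3) (e 4)"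
  "Pf g 5 = g (e 1) (e 2) (e 5) * g (e 3) (e 4) (e 5) - g (e 1) (e 3) (e 5) * g (e 2) (e 4) (e 5) + g (e 1) (e 4) (e 5) * g (e 2) (e 3) (e 5)"
  by (simp_all add: Pf_def)

lemma some_Pf:
  assumes g: "form3 g" and nd: "\<And>u. (\<forall>x y. g u x y = 0) \<Longrightarrow> u = 0"
  shows "\<exists>m. Pf g m \<noteq> 0"
proof (rule ccontr)
  assume "\<not> (\<exists>m. Pf g m \<noteq> 0)"
  then have P: "Pf g m = 0" for m by blast

  have P1: "g (e 1) (e 2) (e 3) * g (e 1) (e 4) (e 5) - g (e 1) (e 2) (e 4) * g (e 1) (e 3) (e 5) + g (e 1) (e 2) (e 5) * g (e 1) (e 3) (e 4) = 0"
    using P[of 1] unfolding Pf_def by simp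
  have P2: "- g (e 1) (e 2) (e 3) * g (e 2) (e 4) (e 5) + g (e 1) (e 2) (e 4) * g (e 2) (e 3) (e 5) - g (e 1) (e 2) (e 5) * g (e 2) (e 3) (e 4) = 0"
    using P[of 2] unfolding Pf_def by simp
  have P3: "g (e 1) (e 2) (e 3) * g (e 3) (e 4) (e 5) - g (e 1) (e 3) (e 4) * g (e 2) (e 3) (e 5) + g (e 1) (e 3) (e 5) * g (e 2) (e 3) (e 4) = 0"
    using P[of 3] unfolding Pf_def by simp
  have P4: "- g (e 1) (e 2) (e 4) * g (e 3) (e 4) (e 5) + g (e 1) (e 3) (e 4) * g (e 2) (e 4) (e 5) - g (e 1) (e 4) (e 5) * g (e 2) (e 3) (e 4) = 0"
    using P[of 4] unfolding Pf_def by simp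
  have P5: "g (e 1) (e 2) (e 5) * g (e 3) (e 4) (e 5) - g (e 1) (e 3) (e 5) * g (e 2) (e 4) (e 5) + g (e 1) (e 4) (e 5) * g (e 2) (e 3) (e 5) = 0"
    using P[of 5] unfolding Pf_def by simp
  note gs = form3_lin_simps[OF g] form3_alt[OF g] form3_swaps[OF g] form3_zero[OF g]
  define k1 where "k1 = 0 *\<^sub>R e 1 + (g (e 3) (e 4) (e 5)) *\<^sub>R e 2 + (- g (e 2) (e 4) (e 5)) *\<^sub>R e 3 + (g (e 2) (e 3) (e 5)) *\<^sub>R e 4 + (- g (e 2) (e 3) (e 4)) *\<^sub>R e 5"
  define k2 where "k2 = (- g (e 3) (e 4) (e 5)) *\<^sub>R e 1 + 0 *\<^sub>R e 2 + (g (e 1) (e 4) (e 5)) *\<^sub>R e 3 + (- g (e 1) (e 3) (e 5)) *\<^sub>R e 4 + (g (e 1) (e 3) (e 4)) *\<^sub>R e 5"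
  define k3 where "k3 = (g (e 2) (e 4) (e 5)) *\<^sub>R e 1 + (- g (e 1) (e 4) (e 5)) *\<^sub>R e 2 + 0 *\<^sub>R e 3 + (g (e 1) (e 2) (e 5)) *\<^sub>R e 4 + (- g (e 1) (e 2) (e 4)) *\<^sub>R e 5"
  define k4 where "k4 = (- g (e 2) (e 3) (e 5)) *\<^sub>R e 1 + (g (e 1) (e 3) (e 5)) *\<^sub>R e 2 + (- g (e 1) (e 2) (e 5)) *\<^sub>R e 3 + 0 *\<^sub>R e 4 + (g (e 1) (e 2) (e 3)) *\<^sub>R e 5"
  have K1: "g k1 (e 1) (e 2) = Pf g 2"
      "g k1 (e 1) (e 3) = - Pf g 3"
      "g k1 (e 1) (e 4) = Pf g 4"
      "g k1 (e 1) (e 5) = - Pf g 5"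
      "g k1 (e 2) (e 3) = 0"
      "g k1 (e 2) (e 4) = 0"
      "g k1 (e 2) (e 5) = 0"
      "g k1 (e 3) (e 4) = 0"
      "g k1 (e 3) (e 5) = 0"
      "g k1 (e 4) (e 5) = 0"
    by (simp only: k1_def gs Pf_eqs; algebra)+
  have K2: "g k2 (e 1) (e 2) = Pf g 1"
      "g k2 (e 1) (e 3) = 0"
      "g k2 (e 1) (e 4) = 0"
      "g k2 (e 1) (e 5) = 0"
      "g k2 (e 2) (e 3) = - Pf g 3"
      "g k2 (e 2) (e 4) = Pf g 4"
      "g k2 (e 2) (e 5) = - Pf g 5"
      "g k2 (e 3) (e 4) = 0"
      "g k2 (e 3) (e 5) = 0"
      "g k2 (e 4) (e 5) = 0"
    by (simp only: k2_def gs Pf_eqs; algebra)+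
  have K3: "g k3 (e 1) (e 2) = 0"
      "g k3 (e 1) (e 3) = Pf g 1"
      "g k3 (e 1) (e 4) = 0"
      "g k3 (e 1) (e 5) = 0"
      "g k3 (e 2) (e 3) = - Pf g 2"
      "g k3 (e 2) (e 4) = 0"
      "g k3 (e 2) (e 5) = 0"
      "g k3 (e 3) (e 4) = Pf g 4"
      "g k3 (e 3) (e 5) = - Pf g 5"
      "g k3 (e 4) (e 5) = 0"
    by (simp only: k3_def gs Pf_eqs; algebra)+
  have K4: "g k4 (e 1) (e 2) = 0"
      "g k4 (e 1) (e 3) = 0"
      "g k4 (e 1) (e 4) = Pf g 1"
      "g k4 (e 1) (e 5) = 0"
      "g k4 (e 2) (e 3) = 0"
      "g k4 (e 2) (e 4) = - Pf g 2"
      "g k4 (e 2) (e 5) = 0"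
      "g k4 (e 3) (e 4) = Pf g 3"
      "g k4 (e 3) (e 5) = 0"
      "g k4 (e 4) (e 5) = - Pf g 5"
    by (simp only: k4_def gs Pf_eqs; algebra)+
  have z: "k1 = 0" "k2 = 0" "k3 = 0" "k4 = 0"
    by (rule nd, (rule allI)+, rule form3_from_2[OF g], simp_all only: K1 K2 K3 K4 P neg_0_equal_iff_equal)+
  have "k1 $ 2 = 0" "k1 $ 3 = 0" "k1 $ 4 = 0" "k1 $ 5 = 0" "k2 $ 3 = 0" "k2 $ 4 = 0" "k2 $ 5 = 0"
    "k3 $ 4 = 0" "k3 $ 5 = 0" "k4 $ 5 = 0" using z by simp_all
  then have c0: "g (e 3) (e 4) (e 5) = 0" "g (e 2) (e 4) (e 5) = 0" "g (e 2) (e 3) (e 5) = 0"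
    "g (e 2) (e 3) (e 4) = 0" "g (e 1) (e 4) (e 5) = 0" "g (e 1) (e 3) (e 5) = 0" "g (e 1) (e 3) (e 4) = 0"
    "g (e 1) (e 2) (e 5) = 0" "g (e 1) (e 2) (e 4) = 0" "g (e 1) (e 2) (e 3) = 0"
    unfolding k1_def k2_def k3_def k4_def by simp_all
  have "g (e 1) x y = 0" for x y
    unfolding form3_expand[OF g, of "e 1" x y] W10_def c0 by simp
  then have "e 1 = (0::vec5)" using nd by blast
  then show False using e_nth[of 1 1] by simp
qed


lemma form3_Psi:
  assumes f: "linear f" and g: "form3 g"
  shows "form3 (\<lambda>x y z. f x * g u y z - f y * g u x z + f z * g u x y)"
  unfolding form3_def
proof (intro conjI allI)
  note gs = form3_lin_simps[OF g]
  note fs = linear_add[OF f] linear_scale[OF f]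
  fix x y z
  show "linear (\<lambda>x. f x * g u y z - f y * g u x z + f z * g u x y)"
    by (rule linearI) (simp_all add: gs fs ring_distribs)
  show "linear (\<lambda>y. f x * g u y z - f y * g u x z + f z * g u x y)"
    by (rule linearI) (simp_all add: gs fs ring_distribs)
  show "linear (\<lambda>z. f x * g u y z - f y * g u x z + f z * g u x y)"
    by (rule linearI) (simp_all add: gs fs ring_distribs)
  have a1: "g u y x = - g u x y" "g u z y = - g u y z" "g u z x = - g u x z"
    using form3_antisym(2)[OF g] by blast+
  show "f x * g u y z - f y * g u x z + f z * g u x y = - (f y * g u x z - f x * g u y z + f z * g u y x)"
    unfolding a1 by simp
  show "f x * g u y z - f y * g u x z + f z * g u x y = - (f x * g u z y - f z * g u x y + f y * g u x z)"
    unfolding a1 by simp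
qed

lemma F10_zero: "F10 0 0 0 0 0 0 0 0 0 0 x y z = 0"
  by (simp add: F10_def)

lemma xi_id_1:
  assumes g: "form3 g"
  shows "xi g (e 1) * g x y z = xi g x * g (e 1) y z - xi g y * g (e 1) x z + xi g z * g (e 1) x y"
proof -
  note gs = form3_alt[OF g] form3_swaps[OF g]
  have fP: "form3 (\<lambda>x y z. xi g x * g (e 1) y z - xi g y * g (e 1) x z + xi g z * g (e 1) x y)"
    by (rule form3_Psi[OF linear_xi g])
  have fL: "form3 (\<lambda>x y z. xi g (e 1) * g x y z)" by (rule form3_scale[OF g])
  have fD: "form3 (\<lambda>x y z. xi g (e 1) * g x y z - (xi g x * g (e 1) y z - xi g y * g (e 1) x z + xi g z * g (e 1) x y))"
    by (rule form3_diff[OF fL fP])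
  have "xi g (e 1) * g x y z - (xi g x * g (e 1) y z - xi g y * g (e 1) x z + xi g z * g (e 1) x y)
        = F10 0 0 0 0 0 0 0 0 0 0 x y z"
    by (rule form3_eqI[OF fD form3_F10]; simp only: F10_e xi_e gs Pf_eqs; algebra)
  then show ?thesis unfolding F10_zero by simp
qed

lemma xi_id_2:
  assumes g: "form3 g"
  shows "xi g (e 2) * g x y z = xi g x * g (e 2) y z - xi g y * g (e 2) x z + xi g z * g (e 2) x y"
proof -
  note gs = form3_alt[OF g] form3_swaps[OF g]
  have fP: "form3 (\<lambda>x y z. xi g x * g (e 2) y z - xi g y * g (e 2) x z + xi g z * g (e 2) x y)"
    by (rule form3_Psi[OF linear_xi g])
  have fL: "form3 (\<lambda>x y z. xi g (e 2) * g x y z)" by (rule form3_scale[OF g])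
  have fD: "form3 (\<lambda>x y z. xi g (e 2) * g x y z - (xi g x * g (e 2) y z - xi g y * g (e 2) x z + xi g z * g (e 2) x y))"
    by (rule form3_diff[OF fL fP])
  have "xi g (e 2) * g x y z - (xi g x * g (e 2) y z - xi g y * g (e 2) x z + xi g z * g (e 2) x y)
        = F10 0 0 0 0 0 0 0 0 0 0 x y z"
    by (rule form3_eqI[OF fD form3_F10]; simp only: F10_e xi_e gs Pf_eqs; algebra)
  then show ?thesis unfolding F10_zero by simp
qed

lemma xi_id_3:
  assumes g: "form3 g"
  shows "xi g (e 3) * g x y z = xi g x * g (e 3) y z - xi g y * g (e 3) x z + xi g z * g (e 3) x y"
proof -
  note gs = form3_alt[OF g] form3_swaps[OF g]
  have fP: "form3 (\<lambda>x y z. xi g x * g (e 3) y z - xi g y * g (e 3) x z + xi g z * g (e 3) x y)"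
    by (rule form3_Psi[OF linear_xi g])
  have fL: "form3 (\<lambda>x y z. xi g (e 3) * g x y z)" by (rule form3_scale[OF g])
  have fD: "form3 (\<lambda>x y z. xi g (e 3) * g x y z - (xi g x * g (e 3) y z - xi g y * g (e 3) x z + xi g z * g (e 3) x y))"
    by (rule form3_diff[OF fL fP])
  have "xi g (e 3) * g x y z - (xi g x * g (e 3) y z - xi g y * g (e 3) x z + xi g z * g (e 3) x y)
        = F10 0 0 0 0 0 0 0 0 0 0 x y z"
    by (rule form3_eqI[OF fD form3_F10]; simp only: F10_e xi_e gs Pf_eqs; algebra)
  then show ?thesis unfolding F10_zero by simp
qed

lemma xi_id_4:
  assumes g: "form3 g"
  shows "xi g (e 4) * g x y z = xi g x * g (e 4) y z - xi g y * g (e 4) x z + xi g z * g (e 4) x y"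
proof -
  note gs = form3_alt[OF g] form3_swaps[OF g]
  have fP: "form3 (\<lambda>x y z. xi g x * g (e 4) y z - xi g y * g (e 4) x z + xi g z * g (e 4) x y)"
    by (rule form3_Psi[OF linear_xi g])
  have fL: "form3 (\<lambda>x y z. xi g (e 4) * g x y z)" by (rule form3_scale[OF g])
  have fD: "form3 (\<lambda>x y z. xi g (e 4) * g x y z - (xi g x * g (e 4) y z - xi g y * g (e 4) x z + xi g z * g (e 4) x y))"
    by (rule form3_diff[OF fL fP])
  have "xi g (e 4) * g x y z - (xi g x * g (e 4) y z - xi g y * g (e 4) x z + xi g z * g (e 4) x y)
        = F10 0 0 0 0 0 0 0 0 0 0 x y z"
    by (rule form3_eqI[OF fD form3_F10]; simp only: F10_e xi_e gs Pf_eqs; algebra)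
  then show ?thesis unfolding F10_zero by simp
qed

lemma xi_id_5:
  assumes g: "form3 g"
  shows "xi g (e 5) * g x y z = xi g x * g (e 5) y z - xi g y * g (e 5) x z + xi g z * g (e 5) x y"
proof -
  note gs = form3_alt[OF g] form3_swaps[OF g]
  have fP: "form3 (\<lambda>x y z. xi g x * g (e 5) y z - xi g y * g (e 5) x z + xi g z * g (e 5) x y)"
    by (rule form3_Psi[OF linear_xi g])
  have fL: "form3 (\<lambda>x y z. xi g (e 5) * g x y z)" by (rule form3_scale[OF g])
  have fD: "form3 (\<lambda>x y z. xi g (e 5) * g x y z - (xi g x * g (e 5) y z - xi g y * g (e 5) x z + xi g z * g (e 5) x y))"
    by (rule form3_diff[OF fL fP])
  have "xi g (e 5) * g x y z - (xi g x * g (e 5) y z - xi g y * g (e 5) x z + xi g z * g (e 5) x y)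
        = F10 0 0 0 0 0 0 0 0 0 0 x y z"
    by (rule form3_eqI[OF fD form3_F10]; simp only: F10_e xi_e gs Pf_eqs; algebra)
  then show ?thesis unfolding F10_zero by simp
qed

lemma xi_id:
  assumes g: "form3 g"
  shows "xi g (e m) * g x y z = xi g x * g (e m) y z - xi g y * g (e m) x z + xi g z * g (e m) x y"
  using exhaust_5[of m] xi_id_1[OF g] xi_id_2[OF g] xi_id_3[OF g] xi_id_4[OF g] xi_id_5[OF g] by blast


abbreviation gam0 :: "vec5 \<Rightarrow> vec5 \<Rightarrow> vec5 \<Rightarrow> real" where
  "gam0 \<equiv> (\<lambda>x y z. wedge3 (sigma 1) (sigma 2) (sigma 5) x y z + wedge3 (sigma 3) (sigma 4) (sigma 5) x y z)"

lemma gam0_F10: "gam0 x y z = F10 0 0 1 0 0 0 0 0 0 1 x y z"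
  by (simp add: F10_def)

lemma form3_gam0: "form3 gam0"
  by (rule form3_add[OF form3_wedge3[OF linear_sigma linear_sigma linear_sigma]
                        form3_wedge3[OF linear_sigma linear_sigma linear_sigma]])

lemma gam0_nondeg:
  assumes "\<forall>x y. gam0 u x y = 0"
  shows "u = 0"
proof -
  have "gam0 u (e 2) (e 5) = 0" "gam0 u (e 1) (e 5) = 0" "gam0 u (e 4) (e 5) = 0"
    "gam0 u (e 3) (e 5) = 0" "gam0 u (e 1) (e 2) = 0" using assms by blast+
  then show ?thesis by (intro vec5_eqI) (simp_all add: wedge3_def sigma_def)
qed

lemma span3_miss: "\<exists>i. e i \<notin> span {p, q, r :: vec5}"
proof (rule ccontr)
  assume "\<not> (\<exists>i. e i \<notin> span {p, q, r})"
  then have E: "e i \<in> span {p, q, r}" for i by blast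
  have "x \<in> span {p, q, r}" for x
  proof -
    have "x$1 *\<^sub>R e 1 + x$2 *\<^sub>R e 2 + x$3 *\<^sub>R e 3 + x$4 *\<^sub>R e 4 + x$5 *\<^sub>R e 5 \<in> span {p, q, r}"
      by (intro span_add span_scale E)
    then show ?thesis by (subst vec5_expand[of x])
  qed
  then have "UNIV \<subseteq> span {p, q, r}" by blast
  then have "dim (UNIV :: vec5 set) \<le> card {p, q, r}" by (rule dim_le_card) simp
  moreover have "card {p, q, r} \<le> 3" by (simp add: card_insert_if)
  moreover have "dim (UNIV :: vec5 set) = 5" by simp
  ultimately show False by linarith
qed

lemma ab_normal:
  assumes g: "form3 g" and nd: "\<And>u. (\<forall>x y. g u x y = 0) \<Longrightarrow> u = 0"
  shows "\<exists>S. linear S \<and> bij S \<and> (\<forall>x y z. pullback3 S g x y z = gam0 x y z)"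
proof -
  note gs = form3_lin_simps[OF g] form3_alt[OF g] form3_zero[OF g]
  note xl = linear_add[OF linear_xi] linear_scale[OF linear_xi] linear_diff[OF linear_xi]
  obtain m where Pm: "Pf g m \<noteq> 0" using some_Pf[OF g nd] by blast
  have xm: "xi g (e m) \<noteq> 0" using Pm exhaust_5[of m] xi_e[of g] by auto
  define f5 where "f5 = (1 / xi g (e m)) *\<^sub>R e m"
  have xf5: "xi g f5 = 1" unfolding f5_def using xm by (simp add: xl)
  have Wv: "g x y z = 0" if "xi g x = 0" "xi g y = 0" "xi g z = 0" for x y z
    using xi_id[OF g, of m x y z] that xm by simp
  define pr where "pr v = v - xi g v *\<^sub>R f5" for v
  have xpr: "xi g (pr v) = 0" for v unfolding pr_def by (simp add: xl xf5)
  define be where "be a b = g a b f5" for a b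
  have be_anti: "be a b = - be b a" for a b unfolding be_def by (rule form3_antisym(1)[OF g])
  have be_self: "be a a = 0" for a unfolding be_def by (rule form3_alt(1)[OF g])
  have be_lin: "be a (x + y) = be a x + be a y" "be a (c *\<^sub>R x) = c * be a x"
    "be (x + y) a = be x a + be y a" "be (c *\<^sub>R x) a = c * be x a" for a x y c
    unfolding be_def by (simp_all add: gs)
  have be_diff: "be a (x - y) = be a x - be a y" for a x y
    using be_lin(1)[of a x "- y"] be_lin(2)[of a "-1" y] by simp
  have Wnd: "w = 0" if w: "xi g w = 0" and hb: "\<And>w'. xi g w' = 0 \<Longrightarrow> be w w' = 0" for w
  proof (rule nd, intro allI)
    fix x y
    have "g w x y = g w (pr x + xi g x *\<^sub>R f5) (pr y + xi g y *\<^sub>R f5)"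
      by (simp add: pr_def)
    also have "\<dots> = g w (pr x) (pr y) + xi g y * be w (pr x) + xi g x * g w f5 (pr y)
        + xi g x * (xi g y * g w f5 f5)"
      by (simp add: gs be_def algebra_simps)
    also have "g w f5 (pr y) = - be w (pr y)" unfolding be_def by (rule form3_antisym(2)[OF g])
    also have "g w f5 f5 = 0" by (rule form3_alt(2)[OF g])
    finally show "g w x y = 0" using Wv[OF w xpr xpr] hb[OF xpr] by simp
  qed
  have nz_be: "\<exists>w'. xi g w' = 0 \<and> be w w' \<noteq> 0" if "xi g w = 0" "w \<noteq> 0" for w
    using Wnd[OF that(1)] that(2) by blast
  obtain i1 where i1: "e i1 \<notin> span {f5, f5, f5}" using span3_miss by blast
  define f1 where "f1 = pr (e i1)"
  have xf1: "xi g f1 = 0" unfolding f1_def by (rule xpr)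
  have f1nz: "f1 \<noteq> 0"
  proof
    assume "f1 = 0"
    then have "e i1 = xi g (e i1) *\<^sub>R f5" unfolding f1_def pr_def by simp
    moreover have "xi g (e i1) *\<^sub>R f5 \<in> span {f5, f5, f5}" by (intro span_scale span_base) simp
    ultimately show False using i1 by simp
  qed
  obtain w1 where w1: "xi g w1 = 0" "be f1 w1 \<noteq> 0" using nz_be[OF xf1 f1nz] by blast
  define f2 where "f2 = (1 / be f1 w1) *\<^sub>R w1"
  have xf2: "xi g f2 = 0" unfolding f2_def by (simp add: xl w1)
  have b12: "be f1 f2 = 1" unfolding f2_def using w1 by (simp add: be_lin)
  have b21: "be f2 f1 = -1" using b12 be_anti[of f2 f1] by simp
  define rh where "rh w = w - be w f2 *\<^sub>R f1 + be w f1 *\<^sub>R f2" for w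
  have xrh: "xi g (rh w) = 0" if "xi g w = 0" for w unfolding rh_def using that by (simp add: xl xf1 xf2)
  have b1rh: "be f1 (rh w) = 0" for w
    unfolding rh_def using be_anti[of f1 w] by (simp add: be_lin be_diff be_self b12)
  have b2rh: "be f2 (rh w) = 0" for w
    unfolding rh_def using be_anti[of f2 w] by (simp add: be_lin be_diff be_self b21)
  obtain i2 where i2: "e i2 \<notin> span {f5, f1, f2}" using span3_miss by blast
  define f3 where "f3 = rh (pr (e i2))"
  have xf3: "xi g f3 = 0" unfolding f3_def by (rule xrh[OF xpr])
  have b13: "be f1 f3 = 0" and b23: "be f2 f3 = 0" unfolding f3_def by (rule b1rh, rule b2rh)
  have f3nz: "f3 \<noteq> 0"
  proof
    assume "f3 = 0"
    then have "e i2 = xi g (e i2) *\<^sub>R f5 + be (pr (e i2)) f2 *\<^sub>R f1 - be (pr (e i2)) f1 *\<^sub>R f2"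
      unfolding f3_def rh_def pr_def by (simp add: algebra_simps)
    moreover have "xi g (e i2) *\<^sub>R f5 + be (pr (e i2)) f2 *\<^sub>R f1 - be (pr (e i2)) f1 *\<^sub>R f2 \<in> span {f5, f1, f2}"
      by (intro span_add span_diff span_scale span_base) simp_all
    ultimately show False using i2 by simp
  qed
  obtain w3 where w3: "xi g w3 = 0" "be f3 w3 \<noteq> 0" using nz_be[OF xf3 f3nz] by blast
  define f4 where "f4 = (1 / be f3 w3) *\<^sub>R rh w3"
  have xf4: "xi g f4 = 0" unfolding f4_def by (simp add: xl xrh[OF w3(1)])
  have b14: "be f1 f4 = 0" unfolding f4_def by (simp add: be_lin b1rh)
  have b24: "be f2 f4 = 0" unfolding f4_def by (simp add: be_lin b2rh)
  have b31: "be f3 f1 = 0" using b13 be_anti[of f3 f1] by simp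
  have b32: "be f3 f2 = 0" using b23 be_anti[of f3 f2] by simp
  have b3rh: "be f3 (rh w3) = be f3 w3"
    unfolding rh_def by (simp add: be_lin be_diff b31 b32)
  have b34: "be f3 f4 = 1" unfolding f4_def using w3(2) by (simp add: be_lin b3rh)
  define S where "S x = x$1 *\<^sub>R f1 + x$2 *\<^sub>R f2 + x$3 *\<^sub>R f3 + x$4 *\<^sub>R f4 + x$5 *\<^sub>R f5" for x :: vec5
  have linS: "linear S"
    by (rule linearI) (simp_all add: S_def algebra_simps scaleR_add_left)
  have Se: "S (e 1) = f1" "S (e 2) = f2" "S (e 3) = f3" "S (e 4) = f4" "S (e 5) = f5"
    by (simp_all add: S_def)
  have vals: "g f1 f2 f3 = 0" "g f1 f2 f4 = 0" "g f1 f3 f4 = 0" "g f2 f3 f4 = 0"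
    using Wv xf1 xf2 xf3 xf4 by blast+
  have vals2: "g f1 f2 f5 = 1" "g f1 f3 f5 = 0" "g f1 f4 f5 = 0" "g f2 f3 f5 = 0" "g f2 f4 f5 = 0" "g f3 f4 f5 = 1"
    using b12 b13 b14 b23 b24 b34 unfolding be_def by simp_all
  have PB: "pullback3 S g x y z = gam0 x y z" for x y z
    unfolding gam0_F10
    by (rule form3_eqI[OF form3_pullback[OF linS g] form3_F10]; simp only: pullback3_def Se F10_e vals vals2)
  have "inj S" unfolding linear_injective_0[OF linS]
  proof (intro allI impI)
    fix v assume "S v = 0"
    then have "\<forall>x y. gam0 v x y = 0" using PB[symmetric] unfolding pullback3_def by (simp add: gs)
    then show "v = 0" by (rule gam0_nondeg)
  qed
  then have "bij S" unfolding bij_def using linear_inj_imp_surj[OF linS] by blast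
  then show ?thesis using linS PB by blast
qed


lemma closed_gam0: "closed3 br_ab gam0"
  unfolding closed3_def
proof (intro conjI allI)
  show "form3 gam0" by (rule form3_gam0)
  fix w x y z show "d3 br_ab gam0 w x y z = 0"
    unfolding d3_def br_ab_def by (simp add: form3_zero[OF form3_gam0])
qed

lemma lc_ab: "lower_central br_ab (Suc k) \<subseteq> {0}"
proof -
  have "{br_ab x y |x y. y \<in> lower_central br_ab k} \<subseteq> {0}" unfolding br_ab_def by blast
  then have "span {br_ab x y |x y. y \<in> lower_central br_ab k} \<subseteq> span {0}" by (rule span_mono)
  then show ?thesis by simp
qed

lemma adm_ab_nd:
  assumes a: "admissible br_ab g" and g: "form3 g" and u: "\<forall>x y. g u x y = 0"
  shows "u = 0"
proof -
  have c: "u \<in> centre br_ab \<inter> lower_central br_ab 0" unfolding centre_def br_ab_def by simp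
  have "\<exists>Z0 :: vec5 \<Rightarrow> real. linear Z0 \<and> (\<forall>L v. v \<in> lower_central br_ab 0 \<longrightarrow> g L u v = Z0 (br_ab L v))"
  proof (intro exI conjI allI impI)
    show "linear (\<lambda>_::vec5. 0::real)" by (rule linear_zero)
    fix L v
    have "g L u v = - g u L v" by (rule form3_antisym(1)[OF g])
    then show "g L u v = 0" using u by simp
  qed
  then show ?thesis using a c unfolding admissible_def by blast
qed

lemma adm_gam0: "admissible br_ab gam0"
  unfolding admissible_def
proof (intro allI impI)
  fix k L0
  assume L0: "L0 \<in> centre br_ab \<inter> lower_central br_ab k"
    and "\<exists>Z0. linear Z0 \<and> (\<forall>L v. v \<in> lower_central br_ab k \<longrightarrow> gam0 L L0 v = Z0 (br_ab L v))"
  then obtain Z0 where Z0: "linear Z0"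
    and HZ: "\<And>L v. v \<in> lower_central br_ab k \<Longrightarrow> gam0 L L0 v = Z0 (br_ab L v)" by blast
  show "L0 = 0"
  proof (cases k)
    case 0
    have "gam0 L0 x y = 0" for x y
    proof -
      have "gam0 L0 x y = - gam0 x L0 y" by (rule form3_antisym(1)[OF form3_gam0])
      also have "gam0 x L0 y = Z0 (br_ab x y)" using HZ[of y x] unfolding 0 by simp
      also have "\<dots> = 0" unfolding br_ab_def by (rule linear_0[OF Z0])
      finally show ?thesis by simp
    qed
    then show ?thesis using gam0_nondeg by blast
  next
    case (Suc k')
    then show ?thesis using L0 lc_ab[of k'] by blast
  qed
qed

lemma form3_span2:
  assumes h: "form3 h" and a: "a \<in> span {b1, b2}" and b: "b \<in> span {b1, b2}" and c: "c \<in> span {b1, b2}"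
  shows "h a b c = 0"
proof -
  have rep: "\<exists>k m. v = m *\<^sub>R b2 + k *\<^sub>R b1" if "v \<in> span {b1, b2}" for v
  proof -
    have "v \<in> {x. \<exists>k. x - k *\<^sub>R b1 \<in> span {b2}}"
      using that unfolding span_insert[of b1 "{b2}"] .
    then obtain k where "v - k *\<^sub>R b1 \<in> span {b2}" by blast
    then have "v - k *\<^sub>R b1 \<in> range (\<lambda>k. k *\<^sub>R b2)" unfolding span_singleton .
    then obtain m where "v - k *\<^sub>R b1 = m *\<^sub>R b2" by blast
    then have "v = m *\<^sub>R b2 + k *\<^sub>R b1" by (simp only: diff_eq_eq)
    then show ?thesis by blast
  qed
  obtain k1 m1 where 1: "a = m1 *\<^sub>R b2 + k1 *\<^sub>R b1" using rep[OF a] by blast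
  obtain k2 m2 where 2: "b = m2 *\<^sub>R b2 + k2 *\<^sub>R b1" using rep[OF b] by blast
  obtain k3 m3 where 3: "c = m3 *\<^sub>R b2 + k3 *\<^sub>R b1" using rep[OF c] by blast
  show ?thesis unfolding 1 2 3
    by (simp add: form3_lin_simps[OF h] form3_alt[OF h])
qed

lemma small_side:
  assumes sA: "subspace A" and sB: "subspace B" and AB: "A \<inter> B = {0}" and nA: "A \<noteq> {0}"
    and dA: "dim A \<le> 2" and h: "form3 h" and h': "form3 h'"
    and p: "\<And>x. q x \<in> A \<and> q' x \<in> B \<and> x = q x + q' x"
    and G: "\<And>x y z. g x y z = h (q x) (q y) (q z) + h' (q' x) (q' y) (q' z)"
  shows "\<exists>u. u \<noteq> 0 \<and> (\<forall>x y. g u x y = 0)"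
proof -
  obtain Bs where Bs: "Bs \<subseteq> A" "independent Bs" "A \<subseteq> span Bs" "card Bs = dim A"
    using basis_exists[of A] by blast
  have fin: "finite Bs" using independent_bound[OF Bs(2)] by blast
  have c2: "card Bs \<le> 2" using Bs(4) dA by simp
  have "\<exists>b1 b2. Bs \<subseteq> {b1, b2}"
  proof (cases "card Bs = 0")
    case True
    then have "Bs = {}" using fin by simp
    then show ?thesis by blast
  next
    case False
    show ?thesis
    proof (cases "card Bs = 1")
      case True
      then obtain b where "Bs = {b}" by (metis One_nat_def card_1_singleton_iff)
      then show ?thesis by blast
    next
      case False2: False
      then have "card Bs = 2" using c2 False by linarith
      then obtain b1 b2 where "Bs = {b1, b2}" by (metis card_2_iff)
      then show ?thesis by blast
    qed
  qed
  then obtain b1 b2 where "Bs \<subseteq> {b1, b2}" by blast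
  then have Asp: "A \<subseteq> span {b1, b2}" using Bs(3) span_mono by blast
  have "\<exists>u. u \<in> A \<and> u \<noteq> 0"
  proof (rule ccontr)
    assume "\<not> (\<exists>u. u \<in> A \<and> u \<noteq> 0)"
    then have "A \<subseteq> {0}" by blast
    then show False using nA subspace_0[OF sA] by blast
  qed
  then obtain u where u: "u \<in> A" "u \<noteq> 0" by blast
  have pA: "q x \<in> A" for x using p[of x] by (elim conjE)
  have pB: "q' x \<in> B" for x using p[of x] by (elim conjE)
  have uq: "u = q u + q' u" using p[of u] by (elim conjE)
  have qB: "q' u \<in> B" by (rule pB)
  have qA: "q u \<in> A" by (rule pA)
  have q'u: "q' u = 0"
  proof -
    have e: "q' u = u - q u" using uq by (metis add_diff_cancel_left')
    have "u - q u \<in> A" by (rule subspace_diff[OF sA u(1) qA])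
    then have "q' u \<in> A" unfolding e[symmetric] .
    then have "q' u \<in> A \<inter> B" using qB by blast
    then show ?thesis using AB by blast
  qed
  have qu: "q u = u" using uq q'u by (metis add.right_neutral)
  have "g u x y = 0" for x y
  proof -
    have "g u x y = h u (q x) (q y) + h' 0 (q' x) (q' y)" using G[of u x y] qu q'u by simp
    also have "h' 0 (q' x) (q' y) = 0" by (rule form3_zero(1)[OF h'])
    also have "h u (q x) (q y) = 0"
      by (rule form3_span2[OF h]) (use Asp u(1) pA in blast)+
    finally show ?thesis by simp
  qed
  then show ?thesis using u by blast
qed

lemma dec_ab_degenerate:
  assumes dec: "decomposable br_ab g"
  shows "\<exists>u. u \<noteq> 0 \<and> (\<forall>x y. g u x y = 0)"
proof -
  from dec obtain L1 L2 p1 p2 g1 g2 where D: "lie_ideal br_ab L1 \<and> lie_ideal br_ab L2 \<and> L1 \<noteq> {0} \<and> L2 \<noteq> {0} \<and> L1 \<inter> L2 = {0}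
     \<and> (\<forall>x. p1 x \<in> L1 \<and> p2 x \<in> L2 \<and> x = p1 x + p2 x)
     \<and> form3 g1 \<and> (\<forall>w x y z. w \<in> L1 \<and> x \<in> L1 \<and> y \<in> L1 \<and> z \<in> L1 \<longrightarrow> d3 br_ab g1 w x y z = 0)
     \<and> form3 g2 \<and> (\<forall>w x y z. w \<in> L2 \<and> x \<in> L2 \<and> y \<in> L2 \<and> z \<in> L2 \<longrightarrow> d3 br_ab g2 w x y z = 0)
     \<and> cohom br_ab g (\<lambda>x y z. pullback3 p1 g1 x y z + pullback3 p2 g2 x y z)"
    unfolding decomposable_def by (elim exE) (rule that, assumption)
  have I: "lie_ideal br_ab L1" using D by (elim conjE)
  have J: "lie_ideal br_ab L2" using D by (elim conjE)
  have n1: "L1 \<noteq> {0}" using D by (elim conjE)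
  have n2: "L2 \<noteq> {0}" using D by (elim conjE)
  have IJ: "L1 \<inter> L2 = {0}" using D by (elim conjE)
  have p: "\<And>x. p1 x \<in> L1 \<and> p2 x \<in> L2 \<and> x = p1 x + p2 x" using D by (elim conjE) blast
  have g1: "form3 g1" using D by (elim conjE)
  have g2: "form3 g2" using D by (elim conjE)
  have co: "cohom br_ab g (\<lambda>x y z. pullback3 p1 g1 x y z + pullback3 p2 g2 x y z)" using D by (elim conjE)
  have sI: "subspace L1" using I unfolding lie_ideal_def by blast
  have sJ: "subspace L2" using J unfolding lie_ideal_def by blast
  obtain b where b: "form2 b"
    and hb: "\<And>x y z. g x y z - (pullback3 p1 g1 x y z + pullback3 p2 g2 x y z) = d2 br_ab b x y z"
    using co unfolding cohom_def exact3_def by blast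
  have bl: "bilinear b" using b unfolding form2_def by blast
  have G: "g x y z = g1 (p1 x) (p1 y) (p1 z) + g2 (p2 x) (p2 y) (p2 z)" for x y z
    using hb[of x y z] unfolding d2_def br_ab_def pullback3_def bilinear_lzero[OF bl] by simp
  have G': "g x y z = g2 (p2 x) (p2 y) (p2 z) + g1 (p1 x) (p1 y) (p1 z)" for x y z
    using G[of x y z] by simp
  have p': "\<And>x. p2 x \<in> L2 \<and> p1 x \<in> L1 \<and> x = p2 x + p1 x" using p by (metis add.commute)
  have sum: "{x + y |x y. x \<in> L1 \<and> y \<in> L2} = UNIV"
  proof -
    have "z \<in> {x + y |x y. x \<in> L1 \<and> y \<in> L2}" for z using p[of z] by blast
    then show ?thesis by blast
  qed
  have "dim {x + y |x y. x \<in> L1 \<and> y \<in> L2} + dim (L1 \<inter> L2) = dim L1 + dim L2"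
    by (rule dim_sums_Int[OF sI sJ])
  then have "dim L1 + dim L2 = 5" unfolding sum IJ by simp
  then have "dim L1 \<le> 2 \<or> dim L2 \<le> 2" by linarith
  then show ?thesis
  proof
    assume "dim L1 \<le> 2"
    then show ?thesis by (rule small_side[OF sI sJ IJ n1 _ g1 g2 p G])
  next
    assume "dim L2 \<le> 2"
    moreover have "L2 \<inter> L1 = {0}" using IJ by blast
    ultimately show ?thesis using small_side[OF sJ sI _ n2 _ g2 g1 p' G'] by blast
  qed
qed

lemma nondecomp_gam0: "\<not> decomposable br_ab gam0"
  using dec_ab_degenerate[of gam0] gam0_nondeg by blast

lemma HQ0_gam0: "HQ0 br_ab gam0"
  unfolding HQ0_def using closed_gam0 adm_gam0 nondecomp_gam0 by blast

lemma class_ab: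
  assumes H: "HQ0 br_ab g"
  shows "same_orbit br_ab g gam0"
proof -
  have cl: "closed3 br_ab g" and a: "admissible br_ab g" using H unfolding HQ0_def by blast+
  have g: "form3 g" using cl unfolding closed3_def by blast
  have nd: "u = 0" if "\<forall>x y. g u x y = 0" for u by (rule adm_ab_nd[OF a g that])
  obtain S where S: "linear S" "bij S" "\<And>x y z. pullback3 S g x y z = gam0 x y z"
    using ab_normal[OF g] nd by blast
  have "lie_aut br_ab S" unfolding lie_aut_def br_ab_def using S(1,2) linear_0[OF S(1)] by simp
  then show ?thesis by (rule orbit_of_pullback) (rule S(3))
qed


theorem proposition5:
  shows "(HQ0 br_ab (\<lambda>x y z. wedge3 (sigma 1) (sigma 2) (sigma 5) x y z
                             + wedge3 (sigma 3) (sigma 4) (sigma 5) x y z)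
          \<and> (\<forall>g. HQ0 br_ab g \<longrightarrow>
               same_orbit br_ab g (\<lambda>x y z. wedge3 (sigma 1) (sigma 2) (sigma 5) x y z
                                        + wedge3 (sigma 3) (sigma 4) (sigma 5) x y z)))
       \<and> (HQ0 br_g52 (wedge3 (sigma 1) (sigma 4) (sigma 5))
          \<and> HQ0 br_g52 (\<lambda>x y z. wedge3 (sigma 1) (sigma 4) (sigma 5) x y z
                               + wedge3 (sigma 2) (sigma 3) (sigma 5) x y z)
          \<and> \<not> same_orbit br_g52 (wedge3 (sigma 1) (sigma 4) (sigma 5))
                 (\<lambda>x y z. wedge3 (sigma 1) (sigma 4) (sigma 5) x y z
                        + wedge3 (sigma 2) (sigma 3) (sigma 5) x y z)
          \<and> (\<forall>g. HQ0 br_g52 g \<longrightarrow>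
               same_orbit br_g52 g (wedge3 (sigma 1) (sigma 4) (sigma 5))
             \<or> same_orbit br_g52 g (\<lambda>x y z. wedge3 (sigma 1) (sigma 4) (sigma 5) x y z
                                         + wedge3 (sigma 2) (sigma 3) (sigma 5) x y z)))"
  using HQ0_gam0 class_ab HQ0_gam1 HQ0_gam2 not_orbit_12 class52 by blast

end
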